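(* Let $q>1$, $0\le M_0<M$, let $u$ be a sufficiently smooth $L$-periodic solution of $u_t=-\alpha uu_x+\beta u_{xxx}$ on $[0,T]\times\mathbb{R}$, $r>\sup_{t,x}|u(t,x)|$. Assume $u^{(0)}_k=u(0,k\Delta x)$, that $u^{(0)},\dots,u^{(M_0+1)}$ are obtained successively as solutions of the scheme, that $\|u^{(m)}\|_\infty\le r$ for $m\le M_0$, that $\Delta t<\min\{\varepsilon_1(q,r,\Delta x),\varepsilon_2(q,r,\Delta x)\}$, and that $\|u^{(M_0+1)}\|_\infty\le qr$. Let $c_0>0$ be a constant independent of $\Delta t,\Delta x$ with $\|\tau^{(m)}\|,\|\delta^+_x\tau^{(m)}\|\le c_0((\Delta t)^2+(\Delta x)^2)$ for $m=0,\dots,M_0$. If $\Delta t\le\Delta x$, then for $m=0,\dots,M_0$, $$\delta^+_t\|\delta^+_x e^{(m)}\|^2\le -\delta^+_t A^{(m)} + C_2\,\mu^+_t\|e^{(m)}\|_{H^1}^2+\Big(\frac{|\alpha|}{6|\beta|}+1\Big)c_0^2\big((\Delta t)^2+(\Delta x)^2\big)^2,$$ where $A^{(m)}=\frac{\alpha}{3\beta}\sum_{k=1}^K (e^{(m)}_k)^3\Delta x$ and $C_2=C_2(q,r)>0$ is a constant independent of $\Delta t$ and $\Delta x$.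
   Context: $L>0$, $K\in\mathbb{N}$, $\Delta x=L/K$; $T>0$, $M\in\mathbb{N}$, $\Delta t=T/M$; $\alpha\in\mathbb{R}$, $\beta\ne0$. Grid functions are $K$-periodic real sequences. $\delta^+_x v_k=(v_{k+1}-v_k)/\Delta x$, $\delta^{\langle 1\rangle}_x v_k = (v_{k+1}-v_{k-1})/(2\Delta x)$, $\delta^{\langle 2\rangle}_x v_k = (v_{k+1}-2v_k+v_{k-1})/(\Delta x)^2$, $\|v\|=(\sum_{k=1}^K v_k^2\Delta x)^{1/2}$, $\|v\|_\infty=\max_k|v_k|$, $\|v\|_{H^1}=(\|v\|^2+\|\delta^+_xv\|^2)^{1/2}$; $\delta^+_t v^{(n)}=(v^{(n+1)}-v^{(n)})/\Delta t$, $\mu^+_t v^{(n)}=(v^{(n+1)}+v^{(n)})/2$, applied also to scalar sequences. The scheme: $u^{(n+1)}$ solves it at step $n$ if $\delta^+_t u^{(n)}_k = -\frac{\alpha}{6}\delta^{\langle 1\rangle}_x\{(u^{(n+1)}_k)^2 + u^{(n+1)}_k u^{(n)}_k + (u^{(n)}_k)^2\} + \beta\delta^{\langle 1\rangle}_x\delta^{\langle 2\rangle}_x \mu^+_t u^{(n)}_k$ for all $k$. $\varepsilon_1(q,r,\Delta x) = (q-1)(\Delta x)^3[\frac{|\alpha|}{6}(\Delta x)^2(q^2+q+1)r + \frac{3}{2}|\beta|(q+1)]^{-1}$, $\varepsilon_2(q,r,\Delta x) = (\Delta x)^3[\frac{|\alpha|}{6}(\Delta x)^2(2q+1)r + \frac{3}{2}|\beta|]^{-1}$.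 $\tilde u^{(m)}_k=u(m\Delta t,k\Delta x)$, $e^{(m)}=u^{(m)}-\tilde u^{(m)}$, and the truncation error $\tau^{(m)}$ is defined by $\delta^+_t \tilde u^{(m)}_k = -\frac{\alpha}{6}\delta^{\langle 1\rangle}_x\{(\tilde u^{(m+1)}_k)^2 + \tilde u^{(m+1)}_k \tilde u^{(m)}_k + (\tilde u^{(m)}_k)^2\} + \beta\delta^{\langle 1\rangle}_x\delta^{\langle 2\rangle}_x \mu^+_t \tilde u^{(m)}_k+\tau^{(m)}_k$. *)

theory Defs
  imports "HOL-Analysis.Analysis"
begin

definition periodic_grid :: "nat \<Rightarrow> (int \<Rightarrow> real) \<Rightarrow> bool" where
  "periodic_grid K v \<longleftrightarrow> (\<forall>k. v (k + int K) = v k)"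

definition dxp :: "real \<Rightarrow> (int \<Rightarrow> real) \<Rightarrow> int \<Rightarrow> real" where
  "dxp dx v k = (v (k + 1) - v k) / dx"

definition dx1 :: "real \<Rightarrow> (int \<Rightarrow> real) \<Rightarrow> int \<Rightarrow> real" where
  "dx1 dx v k = (v (k + 1) - v (k - 1)) / (2 * dx)"

definition dx2 :: "real \<Rightarrow> (int \<Rightarrow> real) \<Rightarrow> int \<Rightarrow> real" where
  "dx2 dx v k = (v (k + 1) - 2 * v k + v (k - 1)) / dx ^ 2"

definition gnorm :: "nat \<Rightarrow> real \<Rightarrow> (int \<Rightarrow> real) \<Rightarrow> real" where
  "gnorm K dx v = sqrt (\<Sum>k = 1..int K. (v k)^2 * dx)"

definition supnorm :: "nat \<Rightarrow> (int \<Rightarrow> real) \<Rightarrow> real" where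
  "supnorm K v = Max ((\<lambda>k. \<bar>v k\<bar>) ` {1..int K})"

definition h1norm :: "nat \<Rightarrow> real \<Rightarrow> (int \<Rightarrow> real) \<Rightarrow> real" where
  "h1norm K dx v = sqrt ((gnorm K dx v)^2 + (gnorm K dx (dxp dx v))^2)"

definition dtp :: "real \<Rightarrow> (nat \<Rightarrow> real) \<Rightarrow> nat \<Rightarrow> real" where
  "dtp dt a n = (a (Suc n) - a n) / dt"

definition mutp :: "(nat \<Rightarrow> real) \<Rightarrow> nat \<Rightarrow> real" where
  "mutp a n = (a (Suc n) + a n) / 2"

text \<open>w = u^(n+1) solves the scheme at step n with v = u^(n).\<close>
definition scheme_step :: "real \<Rightarrow> real \<Rightarrow> real \<Rightarrow> real \<Rightarrow> (int \<Rightarrow> real) \<Rightarrow> (int \<Rightarrow> real) \<Rightarrow> bool" where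
  "scheme_step \<alpha> \<beta> dx dt v w \<longleftrightarrow>
     (\<forall>k. (w k - v k) / dt =
        - \<alpha> / 6 * dx1 dx (\<lambda>j. (w j)^2 + w j * v j + (v j)^2) k
        + \<beta> * dx1 dx (dx2 dx (\<lambda>j. (w j + v j) / 2)) k)"

text \<open>Truncation error of the exact solution grid values ut (ut m k = u(m dt, k dx)).\<close>
definition trunc_err :: "real \<Rightarrow> real \<Rightarrow> real \<Rightarrow> real \<Rightarrow> (nat \<Rightarrow> int \<Rightarrow> real) \<Rightarrow> nat \<Rightarrow> int \<Rightarrow> real" where
  "trunc_err \<alpha> \<beta> dx dt ut m k =
     (ut (Suc m) k - ut m k) / dt
     - ( - \<alpha> / 6 * dx1 dx (\<lambda>j. (ut (Suc m) j)^2 + ut (Suc m) j * ut m j + (ut m j)^2) k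
         + \<beta> * dx1 dx (dx2 dx (\<lambda>j. (ut (Suc m) j + ut m j) / 2)) k)"

definition eps1 :: "real \<Rightarrow> real \<Rightarrow> real \<Rightarrow> real \<Rightarrow> real \<Rightarrow> real" where
  "eps1 \<alpha> \<beta> q r dx = (q - 1) * dx ^ 3 /
     (\<bar>\<alpha>\<bar> / 6 * dx ^ 2 * (q^2 + q + 1) * r + 3 / 2 * \<bar>\<beta>\<bar> * (q + 1))"

definition eps2 :: "real \<Rightarrow> real \<Rightarrow> real \<Rightarrow> real \<Rightarrow> real \<Rightarrow> real" where
  "eps2 \<alpha> \<beta> q r dx = dx ^ 3 /
     (\<bar>\<alpha>\<bar> / 6 * dx ^ 2 * (2 * q + 1) * r + 3 / 2 * \<bar>\<beta>\<bar>)"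

definition smooth_kdv_solution :: "real \<Rightarrow> real \<Rightarrow> real \<Rightarrow> real \<Rightarrow> (real \<Rightarrow> real \<Rightarrow> real) \<Rightarrow> bool" where
  "smooth_kdv_solution \<alpha> \<beta> L T u \<longleftrightarrow>
     (\<forall>t x. u t (x + L) = u t x) \<and>
     (\<exists>ut ux uxx uxxx :: real \<Rightarrow> real \<Rightarrow> real.
        continuous_on ({0..T} \<times> UNIV) (\<lambda>(t, x). u t x) \<and>
        continuous_on ({0..T} \<times> UNIV) (\<lambda>(t, x). ut t x) \<and>
        continuous_on ({0..T} \<times> UNIV) (\<lambda>(t, x). ux t x) \<and>
        continuous_on ({0..T} \<times> UNIV) (\<lambda>(t, x). uxx t x) \<and>
        continuous_on ({0..T} \<times> UNIV) (\<lambda>(t, x). uxxx t x) \<and>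
        (\<forall>t\<in>{0..T}. \<forall>x.
           ((\<lambda>s. u s x) has_real_derivative ut t x) (at t within {0..T}) \<and>
           ((\<lambda>y. u t y) has_real_derivative ux t x) (at x) \<and>
           ((\<lambda>y. ux t y) has_real_derivative uxx t x) (at x) \<and>
           ((\<lambda>y. uxx t y) has_real_derivative uxxx t x) (at x) \<and>
           ut t x = - \<alpha> * u t x * ux t x + \<beta> * uxxx t x))"

end

theory Submission
  imports Defs
begin


lemma sum_shift1:
  assumes "\<forall>k. h (k + int K) = h k"
  shows "(\<Sum>k=1..int K. h (k+1)) = (\<Sum>k=1..int K. h k)"
proof (cases "K = 0")
  case True then show ?thesis by simp
next
  case False
  have "(\<Sum>k=1..int K. h (k+1)) = (\<Sum>k\<in>(\<lambda>k. k+1) ` {1..int K}. h k)"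
    by (subst sum.reindex) (auto simp: inj_on_def)
  also have "(\<lambda>k. k+1) ` {1..int K} = {2..int K + 1}" by (simp add: image_add_atLeastAtMost)
  also have "{2..int K + 1} = insert (int K + 1) {2..int K}" using False by auto
  also have "(\<Sum>k\<in>insert (int K + 1) {2..int K}. h k) = h (int K + 1) + (\<Sum>k=2..int K. h k)" by simp
  also have "h (int K + 1) = h 1" using assms[rule_format, of 1] by (simp add: add.commute)
  also have "{1..int K} = insert 1 {2..int K}" using False by auto
  hence "(\<Sum>k=1..int K. h k) = h 1 + (\<Sum>k=2..int K. h k)" by simp
  finally show ?thesis by simp
qed

lemma pg_apply:
  assumes "periodic_grid K z"
  shows "z (x + int K) = z x" "z (x + int K + c) = z (x + c)" "z (x + int K - c) = z (x - c)"
    "z (c + (x + int K)) = z (c + x)"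
  using assms unfolding periodic_grid_def
  by (metis add.commute add.left_commute, metis add.commute add.left_commute,
      metis add_diff_eq diff_add_eq, metis add.assoc)

lemma sum_shiftm1:
  assumes "periodic_grid K h"
  shows "(\<Sum>k=1..int K. h (k-1)) = (\<Sum>k=1..int K. h k)"
proof -
  have "(\<Sum>k=1..int K. (\<lambda>k. h (k-1)) (k+1)) = (\<Sum>k=1..int K. (\<lambda>k. h (k-1)) k)"
    by (rule sum_shift1) (simp add: pg_apply[OF assms])
  then show ?thesis by simp
qed

lemma sum_shiftp1:
  assumes "periodic_grid K h"
  shows "(\<Sum>k=1..int K. h (k+1)) = (\<Sum>k=1..int K. h k)"
  by (rule sum_shift1) (simp add: pg_apply[OF assms])

lemma sp1:
  assumes "periodic_grid K a" "periodic_grid K b"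
  shows "(\<Sum>k=1..int K. (a (k+1) - a (k-1)) * b k) = - (\<Sum>k=1..int K. a k * (b (k+1) - b (k-1)))"
proof -
  have 1: "(\<Sum>k=1..int K. a (k+1) * b k) = (\<Sum>k=1..int K. a k * b (k-1))"
    using sum_shiftp1[of K "\<lambda>k. a k * b (k-1)"]
    by (simp add: periodic_grid_def pg_apply[OF assms(1)] pg_apply[OF assms(2)])
  have 2: "(\<Sum>k=1..int K. a (k-1) * b k) = (\<Sum>k=1..int K. a k * b (k+1))"
    using sum_shiftm1[of K "\<lambda>k. a k * b (k+1)"]
    by (simp add: periodic_grid_def pg_apply[OF assms(1)] pg_apply[OF assms(2)])
  show ?thesis using 1 2 by (simp add: algebra_simps sum_subtractf)
qed

lemma sp2:
  assumes "periodic_grid K a" "periodic_grid K b"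
  shows "(\<Sum>k=1..int K. a k * (b k - b (k-1))) = - (\<Sum>k=1..int K. (a (k+1) - a k) * b k)"
proof -
  have 2: "(\<Sum>k=1..int K. a k * b (k-1)) = (\<Sum>k=1..int K. a (k+1) * b k)"
    using sum_shiftm1[of K "\<lambda>k. a (k+1) * b k"]
    by (simp add: periodic_grid_def pg_apply[OF assms(1)] pg_apply[OF assms(2)])
  show ?thesis using 2 by (simp add: algebra_simps sum_subtractf)
qed

lemma skew:
  assumes "periodic_grid K a"
  shows "(\<Sum>k=1..int K. (a (k+1) - a (k-1)) * a k) = 0"
  using sp1[OF assms assms] by (simp add: mult.commute)

lemma sqshift:
  assumes "periodic_grid K a"
  shows "(\<Sum>k=1..int K. (a (k+1))^2) = (\<Sum>k=1..int K. (a k)^2)"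
        "(\<Sum>k=1..int K. (a (k-1))^2) = (\<Sum>k=1..int K. (a k)^2)"
  using sum_shiftp1[of K "\<lambda>k. (a k)^2"] sum_shiftm1[of K "\<lambda>k. (a k)^2"]
  by (simp_all add: periodic_grid_def pg_apply[OF assms])



lemma core_identity:
  fixes v w V W \<tau> :: "int \<Rightarrow> real" and K :: nat and dx dt \<alpha> \<beta> :: real
  assumes K: "K > 0" and dx: "dx > 0" and dt: "dt > 0" and bet: "\<beta> \<noteq> 0"
    and pv: "periodic_grid K v" and pw: "periodic_grid K w"
    and pV: "periodic_grid K V" and pW: "periodic_grid K W"
    and sch: "\<forall>k. (w k - v k) / dt =
        - \<alpha> / 6 * dx1 dx (\<lambda>j. (w j)^2 + w j * v j + (v j)^2) k
        + \<beta> * dx1 dx (dx2 dx (\<lambda>j. (w j + v j) / 2)) k"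
    and tau: "\<forall>k. \<tau> k = (W k - V k) / dt - ( - \<alpha> / 6 * dx1 dx (\<lambda>j. (W j)^2 + W j * V j + (V j)^2) k
        + \<beta> * dx1 dx (dx2 dx (\<lambda>j. (W j + V j) / 2)) k)"
  assumes e_def: "e = (\<lambda>k. v k - V k)" and e'_def: "e' = (\<lambda>k. w k - W k)"
  assumes f_def: "f = (\<lambda>k. (e k + e' k) / 2)"
  assumes g_def: "g = (\<lambda>k. (f (k+1) - f k) / dx)"
  assumes y_def: "y = (\<lambda>k. (g k - g (k-1)) / dx)"
  assumes S_def: "S = (\<lambda>k. (e' k)^2 + e' k * e k + (e k)^2)"
  assumes Lf_def: "Lf = (\<lambda>k. 2 * W k * e' k + W k * e k + V k * e' k + 2 * V k * e k)"
  shows "((\<Sum>k=1..int K. (dxp dx e' k)^2 * dx) - (\<Sum>k=1..int K. (dxp dx e k)^2 * dx)) / dt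
     + (\<alpha> / (3*\<beta>) * (\<Sum>k=1..int K. (e' k)^3 * dx) - \<alpha> / (3*\<beta>) * (\<Sum>k=1..int K. (e k)^3 * dx)) / dt
   = dx * (\<alpha>/3) * (\<Sum>k=1..int K. y k * dx1 dx Lf k)
     + dx * (\<alpha> * (\<alpha> / (3*\<beta>)) / 6) * (\<Sum>k=1..int K. Lf k * dx1 dx S k)
     - dx * (\<alpha> / (3*\<beta>)) * (\<Sum>k=1..int K. \<tau> k * S k)
     - 2 * dx * (\<Sum>k=1..int K. dxp dx \<tau> k * g k)"
proof -
  define N where "N \<equiv> \<lambda>k. ((w k)^2 + w k * v k + (v k)^2) - ((W k)^2 + W k * V k + (V k)^2)"
  define E where "E \<equiv> \<lambda>k. (e' k - e k) / dt"
  define a where "a \<equiv> \<alpha> / (3*\<beta>)"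
  note pa = pg_apply[OF pv] pg_apply[OF pw] pg_apply[OF pV] pg_apply[OF pW]
  have pe: "periodic_grid K e" using pa by (simp add: periodic_grid_def e_def)
  have pe': "periodic_grid K e'" using pa by (simp add: periodic_grid_def e'_def)
  have pf: "periodic_grid K f" using pg_apply[OF pe] pg_apply[OF pe'] by (simp add: periodic_grid_def f_def)
  have pg: "periodic_grid K g" using pg_apply[OF pf] by (simp add: periodic_grid_def g_def)
  have py: "periodic_grid K y" using pg_apply[OF pg] by (simp add: periodic_grid_def y_def)
  have pS: "periodic_grid K S" using pg_apply[OF pe] pg_apply[OF pe'] by (simp add: periodic_grid_def S_def)
  have pL: "periodic_grid K Lf" using pa pg_apply[OF pe] pg_apply[OF pe'] by (simp add: periodic_grid_def Lf_def)
  have pE: "periodic_grid K E" using pg_apply[OF pe] pg_apply[OF pe'] by (simp add: periodic_grid_def E_def)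
  have ptau: "periodic_grid K \<tau>"
    unfolding periodic_grid_def
  proof
    fix k show "\<tau> (k + int K) = \<tau> k"
      using tau pa by (simp add: dx1_def dx2_def)
  qed
  have hy: "\<And>k. y k = dx2 dx f k"
    using dx by (simp add: y_def g_def dx2_def field_simps power2_eq_square)
  have hN: "\<And>k. N k = Lf k + S k"
    by (simp add: N_def Lf_def S_def e_def e'_def algebra_simps power2_eq_square)
  have hE: "\<And>k. E k = - \<alpha> / 6 * dx1 dx N k + \<beta> * dx1 dx y k - \<tau> k"
  proof -
    fix k
    show "E k = - \<alpha> / 6 * dx1 dx N k + \<beta> * dx1 dx y k - \<tau> k"
      using sch[rule_format, of k] tau[rule_format, of k] dt dx
      by (simp add: E_def hy e_def e'_def f_def N_def dx1_def dx2_def field_simps)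
  qed
  have gsum: "\<And>k. dxp dx e k + dxp dx e' k = 2 * g k"
    using dx by (simp add: dxp_def g_def f_def field_simps)
  have st1: "\<And>k. ((dxp dx e' k)^2 * dx - (dxp dx e k)^2 * dx) / dt = 2 * ((E (k+1) - E k) * g k)"
  proof -
    fix k
    have "(dxp dx e' k)^2 - (dxp dx e k)^2 = (dxp dx e' k - dxp dx e k) * (dxp dx e k + dxp dx e' k)"
      by (simp add: power2_eq_square algebra_simps)
    also have "\<dots> = (dxp dx e' k - dxp dx e k) * (2 * g k)" using gsum[of k] by simp
    also have "dxp dx e' k - dxp dx e k = dt * (E (k+1) - E k) / dx"
      using dx dt by (simp add: dxp_def E_def field_simps)
    finally show "((dxp dx e' k)^2 * dx - (dxp dx e k)^2 * dx) / dt = 2 * ((E (k+1) - E k) * g k)"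
      using dx dt by (simp add: field_simps)
  qed
  have L0: "((\<Sum>k=1..int K. (dxp dx e' k)^2 * dx) - (\<Sum>k=1..int K. (dxp dx e k)^2 * dx)) / dt
      = - 2 * dx * (\<Sum>k=1..int K. E k * y k)"
  proof -
    have "((\<Sum>k=1..int K. (dxp dx e' k)^2 * dx) - (\<Sum>k=1..int K. (dxp dx e k)^2 * dx)) / dt
        = (\<Sum>k=1..int K. ((dxp dx e' k)^2 * dx - (dxp dx e k)^2 * dx) / dt)"
      by (simp add: diff_divide_distrib sum_divide_distrib sum_subtractf)
    also have "\<dots> = 2 * (\<Sum>k=1..int K. (E (k+1) - E k) * g k)"
      by (simp add: st1 sum_distrib_left)
    also have "(\<Sum>k=1..int K. (E (k+1) - E k) * g k) = - (\<Sum>k=1..int K. E k * (g k - g (k-1)))"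
      using sp2[OF pE pg] by simp
    also have "(\<Sum>k=1..int K. E k * (g k - g (k-1))) = dx * (\<Sum>k=1..int K. E k * y k)"
      using dx by (simp add: y_def sum_distrib_left)
    finally show ?thesis by simp
  qed
  have A0: "(a * (\<Sum>k=1..int K. (e' k)^3 * dx) - a * (\<Sum>k=1..int K. (e k)^3 * dx)) / dt
      = dx * a * (\<Sum>k=1..int K. E k * S k)"
  proof -
    have "\<And>k. (a * ((e' k)^3 * dx) - a * ((e k)^3 * dx)) / dt = dx * a * (E k * S k)"
      using dt by (simp add: E_def S_def field_simps power3_eq_cube power2_eq_square)
    moreover have "(a * (\<Sum>k=1..int K. (e' k)^3 * dx) - a * (\<Sum>k=1..int K. (e k)^3 * dx)) / dt
      = (\<Sum>k=1..int K. (a * ((e' k)^3 * dx) - a * ((e k)^3 * dx)) / dt)"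
      by (simp add: sum_distrib_left diff_divide_distrib sum_divide_distrib sum_subtractf)
    ultimately show ?thesis
      by (simp add: sum_distrib_left)
  qed
  have pt: "\<And>k. E k * (a * S k - 2 * y k) =
      - (\<alpha> * a / 6) * (dx1 dx N k * S k) + (\<alpha>/3) * (dx1 dx N k * y k) + a * \<beta> * (dx1 dx y k * S k)
      - 2 * \<beta> * (dx1 dx y k * y k) - a * (\<tau> k * S k) + 2 * (\<tau> k * y k)"
    by (simp add: hE algebra_simps add_divide_distrib diff_divide_distrib)
  have sy0: "(\<Sum>k=1..int K. dx1 dx y k * y k) = 0"
    using skew[OF py] by (simp add: dx1_def sum_divide_distrib[symmetric])
  have sS0: "(\<Sum>k=1..int K. dx1 dx S k * S k) = 0"
    using skew[OF pS] by (simp add: dx1_def sum_divide_distrib[symmetric])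
  have syS: "(\<Sum>k=1..int K. dx1 dx y k * S k) = - (\<Sum>k=1..int K. y k * dx1 dx S k)"
    using sp1[OF py pS] by (simp add: dx1_def sum_divide_distrib[symmetric] sum_negf)
  have sLS: "(\<Sum>k=1..int K. dx1 dx Lf k * S k) = - (\<Sum>k=1..int K. Lf k * dx1 dx S k)"
    using sp1[OF pL pS] by (simp add: dx1_def sum_divide_distrib[symmetric] sum_negf)
  have d1N: "\<And>k. dx1 dx N k = dx1 dx Lf k + dx1 dx S k"
    by (simp add: dx1_def hN add_divide_distrib[symmetric] algebra_simps)
  have sNS: "(\<Sum>k=1..int K. dx1 dx N k * S k) = - (\<Sum>k=1..int K. Lf k * dx1 dx S k)"
    using sLS sS0 by (simp add: d1N distrib_right sum.distrib)
  have sNy: "(\<Sum>k=1..int K. dx1 dx N k * y k) = (\<Sum>k=1..int K. y k * dx1 dx Lf k) + (\<Sum>k=1..int K. y k * dx1 dx S k)"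
    by (simp add: d1N algebra_simps sum.distrib)
  have sty: "(\<Sum>k=1..int K. \<tau> k * y k) = - (\<Sum>k=1..int K. dxp dx \<tau> k * g k)"
  proof -
    have "(\<Sum>k=1..int K. \<tau> k * y k) = (\<Sum>k=1..int K. \<tau> k * (g k - g (k-1))) / dx"
      by (simp add: y_def sum_divide_distrib)
    also have "\<dots> = - (\<Sum>k=1..int K. (\<tau> (k+1) - \<tau> k) * g k) / dx"
      using sp2[OF ptau pg] by simp
    finally show ?thesis by (simp add: dxp_def sum_divide_distrib)
  qed
  have aB: "a * \<beta> = \<alpha> / 3" using bet by (simp add: a_def)
  have main: "(\<Sum>k=1..int K. E k * (a * S k - 2 * y k)) =
      - (\<alpha> * a / 6) * (\<Sum>k=1..int K. dx1 dx N k * S k) + (\<alpha>/3) * (\<Sum>k=1..int K. dx1 dx N k * y k)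
      + a * \<beta> * (\<Sum>k=1..int K. dx1 dx y k * S k)
      - 2 * \<beta> * (\<Sum>k=1..int K. dx1 dx y k * y k) - a * (\<Sum>k=1..int K. \<tau> k * S k)
      + 2 * (\<Sum>k=1..int K. \<tau> k * y k)"
    by (simp add: pt sum.distrib sum_subtractf sum_distrib_left sum_negf)
  have tot: "- 2 * dx * (\<Sum>k=1..int K. E k * y k) + dx * a * (\<Sum>k=1..int K. E k * S k)
      = dx * (\<Sum>k=1..int K. E k * (a * S k - 2 * y k))"
    by (simp add: algebra_simps sum_subtractf sum_distrib_left sum.distrib sum_negf)
  show ?thesis
    unfolding a_def[symmetric] L0 A0
    unfolding tot main sNS sNy syS sy0 sty aB
    by (simp add: algebra_simps)
qed



lemma amgm: "\<bar>x\<bar> * \<bar>y\<bar> \<le> ((x::real)^2 + y^2) / 2"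
proof -
  have "0 \<le> (\<bar>x\<bar> - \<bar>y\<bar>)^2" by simp
  then show ?thesis by (simp add: power2_eq_square algebra_simps)
qed

lemma prod3: assumes "\<bar>A\<bar> \<le> (c::real)" shows "\<bar>A * x * y\<bar> \<le> c * ((x^2 + y^2)/2)"
proof -
  have "\<bar>A * x * y\<bar> = \<bar>A\<bar> * (\<bar>x\<bar> * \<bar>y\<bar>)" by (simp add: abs_mult)
  also have "\<dots> \<le> c * (\<bar>x\<bar> * \<bar>y\<bar>)" using assms by (simp add: mult_right_mono)
  also have "\<dots> \<le> c * ((x^2 + y^2)/2)"
    using assms by (intro mult_left_mono[OF amgm]) linarith
  finally show ?thesis .
qed

lemma sum_abs_bound:
  assumes "\<And>k. \<bar>h k\<bar> \<le> b k"
  shows "\<bar>\<Sum>k\<in>A. h k\<bar> \<le> (\<Sum>k\<in>A. (b k::real))"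
  by (rule order_trans[OF sum_abs]) (simp add: assms sum_mono)

lemma Ta_bound:
  fixes P f :: "int \<Rightarrow> real"
  assumes pP: "periodic_grid K P" and pf: "periodic_grid K f" and dx: "dx > 0"
    and b1: "B1 \<ge> 0" and b2: "B2 \<ge> 0"
    and h1: "\<forall>k. \<bar>P (k+1) - P k\<bar> \<le> B1 * dx"
    and h2: "\<forall>k. \<bar>P (k+1) - 2 * P k + P (k-1)\<bar> \<le> B2 * dx^2"
  assumes g_def: "g = (\<lambda>k. (f (k+1) - f k) / dx)"
  shows "\<bar>\<Sum>k=1..int K. (g k - g (k-1)) * dx1 dx (\<lambda>j. P j * f j) k\<bar>
     \<le> (B1 + B2) * (3 * (dx * (\<Sum>k=1..int K. (g k)^2)) + dx * (\<Sum>k=1..int K. (f k)^2))"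
proof -
  define Z where "Z \<equiv> \<lambda>k. dx1 dx (\<lambda>j. P j * f j) k"
  define Q where "Q \<equiv> \<lambda>k. 1/2 * (P (k+2) - P (k+1)) * g (k+1) * g k
     + 1/2 * (((P (k+2) - P (k+1)) * f (k+1) - (P k - P (k-1)) * f (k-1)) / dx) * g k"
  have pg: "periodic_grid K g" using pg_apply[OF pf] by (simp add: periodic_grid_def g_def)
  have pZ: "periodic_grid K Z" using pg_apply[OF pf] pg_apply[OF pP]
    by (simp add: periodic_grid_def Z_def dx1_def)
  have s1: "(\<Sum>k=1..int K. (g k - g (k-1)) * Z k) = - (\<Sum>k=1..int K. (Z (k+1) - Z k) * g k)"
    using sp2[OF pZ pg] by (simp add: mult.commute)
  have ptw: "\<And>k. (Z (k+1) - Z k) * g k = 1/2 * P (k+2) * g (k+1) * g k - 1/2 * P k * g (k-1) * g k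
      + 1/2 * (((P (k+2) - P (k+1)) * f (k+1) - (P k - P (k-1)) * f (k-1)) / dx) * g k"
    using dx by (simp add: Z_def dx1_def g_def field_simps)
  have sh: "(\<Sum>k=1..int K. P k * g (k-1) * g k) = (\<Sum>k=1..int K. P (k+1) * g k * g (k+1))"
    using sum_shiftp1[of K "\<lambda>k. P k * g (k-1) * g k"]
    by (simp add: periodic_grid_def pg_apply[OF pP] pg_apply[OF pg])
  have s2: "(\<Sum>k=1..int K. (Z (k+1) - Z k) * g k) = (\<Sum>k=1..int K. Q k)"
  proof -
    have "(\<Sum>k=1..int K. (Z (k+1) - Z k) * g k) =
      (\<Sum>k=1..int K. 1/2 * P (k+2) * g (k+1) * g k) - 1/2 * (\<Sum>k=1..int K. P k * g (k-1) * g k)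
      + (\<Sum>k=1..int K. 1/2 * (((P (k+2) - P (k+1)) * f (k+1) - (P k - P (k-1)) * f (k-1)) / dx) * g k)"
      by (simp add: ptw sum.distrib sum_subtractf sum_distrib_left mult.assoc)
    also have "\<dots> = (\<Sum>k=1..int K. Q k)"
      unfolding sh by (simp add: Q_def sum.distrib sum_subtractf sum_distrib_left algebra_simps)
    finally show ?thesis .
  qed
  have qb: "\<And>k. \<bar>Q k\<bar> \<le> dx * (B1 + B2) * ((g (k+1))^2 + (g k)^2 + (g (k-1))^2 + (f (k+1))^2)"
  proof -
    fix k
    define A1 where "A1 = P (k+2) - P (k+1)"
    define A3 where "A3 = P k - P (k-1)"
    define A2 where "A2 = (A1 - A3) / dx"
    have a1: "\<bar>A1\<bar> \<le> B1 * dx" using h1[rule_format, of "k+1"] by (simp add: A1_def add.assoc)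
    have a3: "\<bar>A3\<bar> \<le> B1 * dx" using h1[rule_format, of "k-1"] by (simp add: A3_def)
    have "\<bar>A1 - A3\<bar> \<le> 2 * B2 * dx^2"
    proof -
      have "A1 - A3 = (P (k+1+1) - 2 * P (k+1) + P (k+1-1)) + (P (k+1) - 2 * P k + P (k-1))"
        by (simp add: A1_def A3_def add.assoc)
      then show ?thesis using h2[rule_format, of "k+1"] h2[rule_format, of k] by linarith
    qed
    then have a2: "\<bar>A2\<bar> \<le> 2 * B2 * dx" using dx
      by (simp add: A2_def abs_divide power2_eq_square divide_le_eq mult.assoc)
    have fd: "f (k+1) - f (k-1) = dx * (g k + g (k-1))"
      using dx by (simp add: g_def field_simps)
    have qe: "Q k = 1/2 * (A1 * g (k+1) * g k) + 1/2 * (A2 * f (k+1) * g k) + 1/2 * (A3 * g k * g k)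
        + 1/2 * (A3 * g (k-1) * g k)"
      using dx by (simp add: Q_def A1_def A2_def A3_def g_def field_simps)
    have t1: "\<bar>A1 * g (k+1) * g k\<bar> \<le> B1 * dx * (((g (k+1))^2 + (g k)^2)/2)" by (rule prod3[OF a1])
    have t2: "\<bar>A2 * f (k+1) * g k\<bar> \<le> 2 * B2 * dx * (((f (k+1))^2 + (g k)^2)/2)" by (rule prod3[OF a2])
    have t3: "\<bar>A3 * g k * g k\<bar> \<le> B1 * dx * (((g k)^2 + (g k)^2)/2)" by (rule prod3[OF a3])
    have t4: "\<bar>A3 * g (k-1) * g k\<bar> \<le> B1 * dx * (((g (k-1))^2 + (g k)^2)/2)" by (rule prod3[OF a3])
    have "\<bar>Q k\<bar> \<le> 1/2 * \<bar>A1 * g (k+1) * g k\<bar> + 1/2 * \<bar>A2 * f (k+1) * g k\<bar> + 1/2 * \<bar>A3 * g k * g k\<bar>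
        + 1/2 * \<bar>A3 * g (k-1) * g k\<bar>" unfolding qe by linarith
    also have "\<dots> \<le> 1/2 * (B1 * dx * (((g (k+1))^2 + (g k)^2)/2)) + 1/2 * (2 * B2 * dx * (((f (k+1))^2 + (g k)^2)/2))
       + 1/2 * (B1 * dx * (((g k)^2 + (g k)^2)/2)) + 1/2 * (B1 * dx * (((g (k-1))^2 + (g k)^2)/2))"
      using t1 t2 t3 t4 by linarith
    also have "\<dots> \<le> dx * (B1 + B2) * ((g (k+1))^2 + (g k)^2 + (g (k-1))^2 + (f (k+1))^2)"
    proof -
      have "0 \<le> dx * B1 * (g (k+1))^2" "0 \<le> dx * B1 * (g k)^2" "0 \<le> dx * B1 * (g (k-1))^2" "0 \<le> dx * B1 * (f (k+1))^2"
        "0 \<le> dx * B2 * (g (k+1))^2" "0 \<le> dx * B2 * (g k)^2" "0 \<le> dx * B2 * (g (k-1))^2" "0 \<le> dx * B2 * (f (k+1))^2"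
        using b1 b2 dx by simp_all
      then show ?thesis unfolding distrib_left distrib_right add_divide_distrib mult.assoc
        by (simp only: mult.left_commute[of dx])
    qed
    finally show "\<bar>Q k\<bar> \<le> dx * (B1 + B2) * ((g (k+1))^2 + (g k)^2 + (g (k-1))^2 + (f (k+1))^2)" .
  qed
  have "\<bar>\<Sum>k=1..int K. (g k - g (k-1)) * Z k\<bar> = \<bar>\<Sum>k=1..int K. Q k\<bar>" using s1 s2 by simp
  also have "\<dots> \<le> (\<Sum>k=1..int K. dx * (B1 + B2) * ((g (k+1))^2 + (g k)^2 + (g (k-1))^2 + (f (k+1))^2))"
    by (rule sum_abs_bound[OF qb])
  also have "\<dots> = dx * (B1 + B2) * ((\<Sum>k=1..int K. (g (k+1))^2) + (\<Sum>k=1..int K. (g k)^2)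
      + (\<Sum>k=1..int K. (g (k-1))^2) + (\<Sum>k=1..int K. (f (k+1))^2))"
    by (simp only: sum_distrib_left[symmetric] sum.distrib)
  also have "\<dots> = (B1 + B2) * (3 * (dx * (\<Sum>k=1..int K. (g k)^2)) + dx * (\<Sum>k=1..int K. (f k)^2))"
    unfolding sqshift[OF pg] sqshift[OF pf] by (simp add: algebra_simps)
  finally show ?thesis unfolding Z_def .
qed



lemma sq_sum2: "((a::real) + b)^2 \<le> 2 * (a^2 + b^2)"
proof - have "0 \<le> (a - b)^2" by simp then show ?thesis by (simp add: power2_eq_square algebra_simps) qed

lemma prodsum: "\<bar>(a::real)\<bar> * \<bar>b\<bar> \<le> (a^2 + b^2)/2" by (rule amgm)

lemma Tb_bound:
  fixes z g e e' :: "int \<Rightarrow> real"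
  assumes pg: "periodic_grid K g" and pe: "periodic_grid K e" and pe': "periodic_grid K e'"
    and dx: "dx > 0" and dxL: "dx \<le> L" and c: "c \<ge> 0"
    and hz: "\<forall>k. \<bar>z k\<bar> \<le> c * dx^3 * (\<bar>e k\<bar> + \<bar>e' k\<bar>)"
  shows "\<bar>\<Sum>k=1..int K. (g k - g (k-1)) * dx1 dx z k\<bar>
     \<le> c * L * (dx * (\<Sum>k=1..int K. (g k)^2) + 2 * (dx * (\<Sum>k=1..int K. (e k)^2)) + 2 * (dx * (\<Sum>k=1..int K. (e' k)^2)))"
proof -
  have pb: "\<bar>(g k - g (k-1)) * dx1 dx z k\<bar> \<le> c * L * dx / 2 * ((g k)^2 + (g (k-1))^2
      + 2 * ((e (k+1))^2 + (e' (k+1))^2 + (e (k-1))^2 + (e' (k-1))^2))" for k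
  proof -
    define G where "G = \<bar>g k\<bar> + \<bar>g (k-1)\<bar>"
    define X where "X = (\<bar>e (k+1)\<bar> + \<bar>e' (k+1)\<bar>) + (\<bar>e (k-1)\<bar> + \<bar>e' (k-1)\<bar>)"
    have G0: "G \<ge> 0" "X \<ge> 0" by (simp_all add: G_def X_def)
    have "\<bar>(g k - g (k-1)) * dx1 dx z k\<bar> = \<bar>g k - g (k-1)\<bar> * \<bar>z (k+1) - z (k-1)\<bar> / (2 * dx)"
      using dx by (simp add: dx1_def abs_mult abs_divide)
    also have "\<dots> \<le> G * (c * dx^3 * X) / (2 * dx)"
    proof -
      have "\<bar>z (k+1) - z (k-1)\<bar> \<le> c * dx^3 * X"
        using hz[rule_format, of "k+1"] hz[rule_format, of "k-1"] unfolding X_def distrib_left by linarith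
      moreover have "\<bar>g k - g (k-1)\<bar> \<le> G" unfolding G_def by linarith
      ultimately show ?thesis using dx G0
        by (intro divide_right_mono mult_mono) auto
    qed
    also have "\<dots> = c * dx^2 / 2 * (G * X)" using dx by (simp add: power2_eq_square power3_eq_cube field_simps)
    also have "\<dots> \<le> c * (L * dx) / 2 * (G * X)"
    proof -
      have "dx^2 \<le> L * dx" using dx dxL by (simp add: power2_eq_square mult_right_mono)
      then show ?thesis using c G0 by (intro mult_right_mono divide_right_mono mult_left_mono) auto
    qed
    also have "G * X \<le> (g k)^2 + (g (k-1))^2 + 2 * ((e (k+1))^2 + (e' (k+1))^2 + (e (k-1))^2 + (e' (k-1))^2)"
    proof -
      have "G * X \<le> (G^2 + X^2)/2" using amgm[of G X] G0 by simp
      moreover have "G^2 \<le> 2 * ((g k)^2 + (g (k-1))^2)" using sq_sum2[of "\<bar>g k\<bar>" "\<bar>g (k-1)\<bar>"] by (simp add: G_def)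
      moreover have "X^2 \<le> 2 * ((\<bar>e (k+1)\<bar> + \<bar>e' (k+1)\<bar>)^2 + (\<bar>e (k-1)\<bar> + \<bar>e' (k-1)\<bar>)^2)"
        unfolding X_def by (rule sq_sum2)
      moreover have "(\<bar>e (k+1)\<bar> + \<bar>e' (k+1)\<bar>)^2 \<le> 2 * ((e (k+1))^2 + (e' (k+1))^2)"
        using sq_sum2[of "\<bar>e (k+1)\<bar>" "\<bar>e' (k+1)\<bar>"] by simp
      moreover have "(\<bar>e (k-1)\<bar> + \<bar>e' (k-1)\<bar>)^2 \<le> 2 * ((e (k-1))^2 + (e' (k-1))^2)"
        using sq_sum2[of "\<bar>e (k-1)\<bar>" "\<bar>e' (k-1)\<bar>"] by simp
      ultimately show ?thesis unfolding distrib_left add_divide_distrib by linarith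
    qed
    hence "c * (L * dx) / 2 * (G * X) \<le> c * (L * dx) / 2 * ((g k)^2 + (g (k-1))^2 + 2 * ((e (k+1))^2 + (e' (k+1))^2 + (e (k-1))^2 + (e' (k-1))^2))"
      using c dx dxL by (intro mult_left_mono) auto
    finally show ?thesis by (simp add: mult.assoc)
  qed
  have "\<bar>\<Sum>k=1..int K. (g k - g (k-1)) * dx1 dx z k\<bar> \<le> (\<Sum>k=1..int K. c * L * dx / 2 * ((g k)^2 + (g (k-1))^2
      + 2 * ((e (k+1))^2 + (e' (k+1))^2 + (e (k-1))^2 + (e' (k-1))^2)))"
    by (rule sum_abs_bound[OF pb])
  also have "\<dots> = c * L * dx / 2 * ((\<Sum>k=1..int K. (g k)^2) + (\<Sum>k=1..int K. (g (k-1))^2)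
      + 2 * ((\<Sum>k=1..int K. (e (k+1))^2) + (\<Sum>k=1..int K. (e' (k+1))^2) + (\<Sum>k=1..int K. (e (k-1))^2) + (\<Sum>k=1..int K. (e' (k-1))^2)))"
    by (simp only: sum_distrib_left[symmetric] sum.distrib)
  also have "\<dots> = c * L * (dx * (\<Sum>k=1..int K. (g k)^2) + 2 * (dx * (\<Sum>k=1..int K. (e k)^2)) + 2 * (dx * (\<Sum>k=1..int K. (e' k)^2)))"
    unfolding sqshift[OF pg] sqshift[OF pe] sqshift[OF pe'] by (simp add: algebra_simps)
  finally show ?thesis .
qed



lemma xy4: "((x1::real) + x2) * (y1 + y2 + y3 + y4) \<le> 2 * (x1^2 + x2^2) + (y1^2 + y2^2 + y3^2 + y4^2)"
proof -
  define X where "X = x1 + x2"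
  define Y where "Y = y1 + y2 + y3 + y4"
  have "0 \<le> (X - Y/2)^2" by simp
  hence a: "X * Y \<le> X^2 + Y^2/4" by (simp add: power2_eq_square algebra_simps)
  have b: "X^2 \<le> 2 * (x1^2 + x2^2)" unfolding X_def by (rule sq_sum2)
  have c1: "Y^2 \<le> 2 * ((y1 + y2)^2 + (y3 + y4)^2)" unfolding Y_def using sq_sum2[of "y1+y2" "y3+y4"] by (simp add: add.assoc)
  have c2: "(y1 + y2)^2 \<le> 2 * (y1^2 + y2^2)" "(y3 + y4)^2 \<le> 2 * (y3^2 + y4^2)" by (rule sq_sum2)+
  show ?thesis using a b c1 c2 unfolding X_def[symmetric] Y_def[symmetric] distrib_left add_divide_distrib by linarith
qed

lemma LS_bound:
  fixes e e' W V :: "int \<Rightarrow> real"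
  assumes pe: "periodic_grid K e" and pe': "periodic_grid K e'" and dx: "dx > 0"
    and r: "r \<ge> 0" and R: "R \<ge> 0"
    and hW: "\<forall>k. \<bar>W k\<bar> \<le> r" and hV: "\<forall>k. \<bar>V k\<bar> \<le> r"
    and he: "\<forall>k. \<bar>e k\<bar> \<le> R" and he': "\<forall>k. \<bar>e' k\<bar> \<le> R"
  assumes S_def: "S = (\<lambda>k. (e' k)^2 + e' k * e k + (e k)^2)"
  assumes Lf_def: "Lf = (\<lambda>k. 2 * W k * e' k + W k * e k + V k * e' k + 2 * V k * e k)"
  shows "\<bar>dx * (\<Sum>k=1..int K. Lf k * dx1 dx S k)\<bar> \<le> 9 * r * R * (dx * (\<Sum>k=1..int K. (e k)^2) + dx * (\<Sum>k=1..int K. (e' k)^2)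
      + dx * (\<Sum>k=1..int K. (dxp dx e k)^2) + dx * (\<Sum>k=1..int K. (dxp dx e' k)^2))"
proof -
  define ge where "ge = dxp dx e"
  define ge' where "ge' = dxp dx e'"
  have pge: "periodic_grid K ge" using pg_apply[OF pe] by (simp add: periodic_grid_def ge_def dxp_def)
  have pge': "periodic_grid K ge'" using pg_apply[OF pe'] by (simp add: periodic_grid_def ge'_def dxp_def)
  have pb: "\<bar>Lf k * dx1 dx S k\<bar> \<le> 9 * r * R / 2 * (2 * ((e k)^2 + (e' k)^2) + ((ge' k)^2 + (ge' (k-1))^2 + (ge k)^2 + (ge (k-1))^2))" for k
  proof -
    have l: "\<bar>Lf k\<bar> \<le> 3 * r * (\<bar>e k\<bar> + \<bar>e' k\<bar>)"
    proof -
      have "\<bar>Lf k\<bar> \<le> 2 * (\<bar>W k\<bar> * \<bar>e' k\<bar>) + \<bar>W k\<bar> * \<bar>e k\<bar> + \<bar>V k\<bar> * \<bar>e' k\<bar> + 2 * (\<bar>V k\<bar> * \<bar>e k\<bar>)"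
        unfolding Lf_def by (simp add: abs_mult[symmetric] mult.assoc)
      moreover have "\<bar>W k\<bar> * \<bar>e' k\<bar> \<le> r * \<bar>e' k\<bar>" "\<bar>W k\<bar> * \<bar>e k\<bar> \<le> r * \<bar>e k\<bar>"
        "\<bar>V k\<bar> * \<bar>e' k\<bar> \<le> r * \<bar>e' k\<bar>" "\<bar>V k\<bar> * \<bar>e k\<bar> \<le> r * \<bar>e k\<bar>"
        using hW hV by (simp_all add: mult_right_mono)
      ultimately show ?thesis unfolding distrib_left by linarith
    qed
    define a where "a = e' (k+1)" define a' where "a' = e' (k-1)"
    define b where "b = e (k+1)" define b' where "b' = e (k-1)"
    have Sd: "S (k+1) - S (k-1) = (a - a') * (a + a' + b) + (b - b') * (a' + b + b')"
      by (simp add: S_def a_def a'_def b_def b'_def power2_eq_square algebra_simps)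
    have aa: "a - a' = dx * (ge' k + ge' (k-1))" using dx by (simp add: a_def a'_def ge'_def dxp_def field_simps)
    have bb: "b - b' = dx * (ge k + ge (k-1))" using dx by (simp add: b_def b'_def ge_def dxp_def field_simps)
    have m1: "\<bar>a + a' + b\<bar> \<le> 3 * R" using he'[rule_format, of "k+1"] he'[rule_format, of "k-1"] he[rule_format, of "k+1"]
      unfolding a_def a'_def b_def by linarith
    have m2: "\<bar>a' + b + b'\<bar> \<le> 3 * R" using he'[rule_format, of "k-1"] he[rule_format, of "k+1"] he[rule_format, of "k-1"]
      unfolding a'_def b'_def b_def by linarith
    have "\<bar>S (k+1) - S (k-1)\<bar> \<le> \<bar>a - a'\<bar> * \<bar>a + a' + b\<bar> + \<bar>b - b'\<bar> * \<bar>a' + b + b'\<bar>"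
      unfolding Sd by (metis abs_mult abs_triangle_ineq)
    also have "\<dots> \<le> \<bar>a - a'\<bar> * (3 * R) + \<bar>b - b'\<bar> * (3 * R)"
      using m1 m2 by (intro add_mono mult_left_mono) auto
    also have "\<dots> \<le> dx * (\<bar>ge' k\<bar> + \<bar>ge' (k-1)\<bar>) * (3 * R) + dx * (\<bar>ge k\<bar> + \<bar>ge (k-1)\<bar>) * (3 * R)"
      unfolding aa bb using dx R by (intro add_mono mult_right_mono) (auto simp: abs_mult intro!: mult_left_mono)
    finally have sd: "\<bar>dx1 dx S k\<bar> \<le> 3 * R / 2 * (\<bar>ge' k\<bar> + \<bar>ge' (k-1)\<bar> + \<bar>ge k\<bar> + \<bar>ge (k-1)\<bar>)"
      using dx by (simp add: dx1_def abs_divide divide_le_eq field_simps)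
    have "\<bar>Lf k * dx1 dx S k\<bar> \<le> (3 * r * (\<bar>e k\<bar> + \<bar>e' k\<bar>)) * (3 * R / 2 * (\<bar>ge' k\<bar> + \<bar>ge' (k-1)\<bar> + \<bar>ge k\<bar> + \<bar>ge (k-1)\<bar>))"
      unfolding abs_mult using l sd r by (intro mult_mono) auto
    also have "\<dots> = 9 * r * R / 2 * ((\<bar>e k\<bar> + \<bar>e' k\<bar>) * (\<bar>ge' k\<bar> + \<bar>ge' (k-1)\<bar> + \<bar>ge k\<bar> + \<bar>ge (k-1)\<bar>))"
      by (simp add: algebra_simps)
    also have "\<dots> \<le> 9 * r * R / 2 * (2 * ((e k)^2 + (e' k)^2) + ((ge' k)^2 + (ge' (k-1))^2 + (ge k)^2 + (ge (k-1))^2))"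
      using xy4[of "\<bar>e k\<bar>" "\<bar>e' k\<bar>" "\<bar>ge' k\<bar>" "\<bar>ge' (k-1)\<bar>" "\<bar>ge k\<bar>" "\<bar>ge (k-1)\<bar>"] r R
      by (intro mult_left_mono) auto
    finally show ?thesis .
  qed
  have "\<bar>dx * (\<Sum>k=1..int K. Lf k * dx1 dx S k)\<bar> = dx * \<bar>\<Sum>k=1..int K. Lf k * dx1 dx S k\<bar>"
    using dx by (simp add: abs_mult)
  also have "\<dots> \<le> dx * (\<Sum>k=1..int K. 9 * r * R / 2 * (2 * ((e k)^2 + (e' k)^2) + ((ge' k)^2 + (ge' (k-1))^2 + (ge k)^2 + (ge (k-1))^2)))"
    using dx by (intro mult_left_mono sum_abs_bound pb) auto
  also have "\<dots> = dx * (9 * r * R / 2) * (2 * ((\<Sum>k=1..int K. (e k)^2) + (\<Sum>k=1..int K. (e' k)^2)) + ((\<Sum>k=1..int K. (ge' k)^2) + (\<Sum>k=1..int K. (ge' (k-1))^2) + (\<Sum>k=1..int K. (ge k)^2) + (\<Sum>k=1..int K. (ge (k-1))^2)))"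
    by (simp only: sum_distrib_left[symmetric] sum.distrib mult.assoc)
  also have "\<dots> = 9 * r * R * (dx * (\<Sum>k=1..int K. (e k)^2) + dx * (\<Sum>k=1..int K. (e' k)^2)
      + dx * (\<Sum>k=1..int K. (ge k)^2) + dx * (\<Sum>k=1..int K. (ge' k)^2))"
    unfolding sqshift[OF pge] sqshift[OF pge'] by (simp add: algebra_simps)
  finally show ?thesis unfolding ge_def ge'_def .
qed



definition ccore :: "real \<Rightarrow> real \<Rightarrow> real \<Rightarrow> real \<Rightarrow> real \<Rightarrow> real \<Rightarrow> real \<Rightarrow> real \<Rightarrow> real \<Rightarrow> real" where
  "ccore \<alpha> \<beta> r R Bt B1 B2 L cb = \<bar>\<alpha>\<bar> / 3 * (24 * (B1 + B2) + 3 * Bt * cb * L)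
     + \<bar>\<alpha> * (\<alpha> / (3*\<beta>))\<bar> / 6 * (9 * r * R) + \<bar>\<alpha> / (3*\<beta>)\<bar> * (4 * R^2) + 1"

lemma ccore_pos: "r \<ge> 0 \<Longrightarrow> R \<ge> 0 \<Longrightarrow> Bt \<ge> 0 \<Longrightarrow> B1 \<ge> 0 \<Longrightarrow> B2 \<ge> 0 \<Longrightarrow> L \<ge> 0 \<Longrightarrow> cb \<ge> 0
  \<Longrightarrow> ccore \<alpha> \<beta> r R Bt B1 B2 L cb \<ge> 1"
proof -
  assume a: "r \<ge> 0" "R \<ge> 0" "Bt \<ge> 0" "B1 \<ge> 0" "B2 \<ge> 0" "L \<ge> 0" "cb \<ge> 0"
  have "0 \<le> \<bar>\<alpha>\<bar> / 3 * (24 * (B1 + B2) + 3 * Bt * cb * L)" using a by (intro mult_nonneg_nonneg) auto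
  moreover have "0 \<le> \<bar>\<alpha> * (\<alpha> / (3*\<beta>))\<bar> / 6 * (9 * r * R)" using a by (intro mult_nonneg_nonneg) auto
  moreover have "0 \<le> \<bar>\<alpha> / (3*\<beta>)\<bar> * (4 * R^2)" by simp
  ultimately show ?thesis unfolding ccore_def by linarith
qed

lemma abs_mul_le: "\<bar>p\<bar> \<le> (B::real) \<Longrightarrow> x * p \<le> \<bar>x\<bar> * B"
  by (metis abs_ge_self abs_mult mult_left_mono abs_ge_zero order_trans)

lemma core_ineq:
  fixes v w V W \<tau> :: "int \<Rightarrow> real" and K :: nat and dx dt \<alpha> \<beta> :: real
  assumes K: "K > 0" and dx: "dx > 0" and dt: "dt > 0" and bet: "\<beta> \<noteq> 0"
    and pv: "periodic_grid K v" and pw: "periodic_grid K w"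
    and pV: "periodic_grid K V" and pW: "periodic_grid K W"
    and sch: "\<forall>k. (w k - v k) / dt =
        - \<alpha> / 6 * dx1 dx (\<lambda>j. (w j)^2 + w j * v j + (v j)^2) k
        + \<beta> * dx1 dx (dx2 dx (\<lambda>j. (w j + v j) / 2)) k"
    and tau: "\<forall>k. \<tau> k = (W k - V k) / dt - ( - \<alpha> / 6 * dx1 dx (\<lambda>j. (W j)^2 + W j * V j + (V j)^2) k
        + \<beta> * dx1 dx (dx2 dx (\<lambda>j. (W j + V j) / 2)) k)"
    and dxL: "dx \<le> L" and dtc: "dt \<le> cb * dx^3" and cb: "cb \<ge> 0"
    and r: "r \<ge> 0" and R: "R \<ge> 0" and Bt: "Bt \<ge> 0" and B1: "B1 \<ge> 0" and B2: "B2 \<ge> 0"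
    and hW: "\<forall>k. \<bar>W k\<bar> \<le> r" and hV: "\<forall>k. \<bar>V k\<bar> \<le> r"
    and he: "\<forall>k. \<bar>v k - V k\<bar> \<le> R" and he': "\<forall>k. \<bar>w k - W k\<bar> \<le> R"
    and hWV: "\<forall>k. \<bar>W k - V k\<bar> \<le> Bt * dt"
    and hW1: "\<forall>k. \<bar>W (k+1) - W k\<bar> \<le> B1 * dx" and hV1: "\<forall>k. \<bar>V (k+1) - V k\<bar> \<le> B1 * dx"
    and hW2: "\<forall>k. \<bar>W (k+1) - 2 * W k + W (k-1)\<bar> \<le> B2 * dx^2"
    and hV2: "\<forall>k. \<bar>V (k+1) - 2 * V k + V (k-1)\<bar> \<le> B2 * dx^2"
  shows "((\<Sum>k=1..int K. (dxp dx (\<lambda>k. w k - W k) k)^2 * dx) - (\<Sum>k=1..int K. (dxp dx (\<lambda>k. v k - V k) k)^2 * dx)) / dt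
     \<le> - (\<alpha> / (3*\<beta>) * (\<Sum>k=1..int K. (w k - W k)^3 * dx) - \<alpha> / (3*\<beta>) * (\<Sum>k=1..int K. (v k - V k)^3 * dx)) / dt
     + ccore \<alpha> \<beta> r R Bt B1 B2 L cb * (dx * (\<Sum>k=1..int K. (v k - V k)^2) + dx * (\<Sum>k=1..int K. (w k - W k)^2)
         + dx * (\<Sum>k=1..int K. (dxp dx (\<lambda>k. v k - V k) k)^2) + dx * (\<Sum>k=1..int K. (dxp dx (\<lambda>k. w k - W k) k)^2))
     + dx * (\<Sum>k=1..int K. (dxp dx \<tau> k)^2) + \<bar>\<alpha>\<bar> / (6 * \<bar>\<beta>\<bar>) * (dx * (\<Sum>k=1..int K. (\<tau> k)^2))"
proof -
  define e where "e = (\<lambda>k. v k - V k)"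
  define e' where "e' = (\<lambda>k. w k - W k)"
  define f where "f = (\<lambda>k. (e k + e' k) / 2)"
  define g where "g = (\<lambda>k. (f (k+1) - f k) / dx)"
  define y where "y = (\<lambda>k. (g k - g (k-1)) / dx)"
  define S where "S = (\<lambda>k. (e' k)^2 + e' k * e k + (e k)^2)"
  define Lf where "Lf = (\<lambda>k. 2 * W k * e' k + W k * e k + V k * e' k + 2 * V k * e k)"
  define P where "P = (\<lambda>k. W k + V k)"
  define z where "z = (\<lambda>k. (W k - V k) * (e' k - e k))"
  define a where "a = \<alpha> / (3*\<beta>)"
  define Hs where "Hs = dx * (\<Sum>k=1..int K. (e k)^2) + dx * (\<Sum>k=1..int K. (e' k)^2)
         + dx * (\<Sum>k=1..int K. (dxp dx e k)^2) + dx * (\<Sum>k=1..int K. (dxp dx e' k)^2)"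
  note pa = pg_apply[OF pv] pg_apply[OF pw] pg_apply[OF pV] pg_apply[OF pW]
  have pe: "periodic_grid K e" using pa by (simp add: periodic_grid_def e_def)
  have pe': "periodic_grid K e'" using pa by (simp add: periodic_grid_def e'_def)
  have pf: "periodic_grid K f" using pg_apply[OF pe] pg_apply[OF pe'] by (simp add: periodic_grid_def f_def)
  have pg: "periodic_grid K g" using pg_apply[OF pf] by (simp add: periodic_grid_def g_def)
  have pP: "periodic_grid K P" using pa by (simp add: periodic_grid_def P_def)
  have ptau: "periodic_grid K \<tau>"
    unfolding periodic_grid_def
  proof
    fix k show "\<tau> (k + int K) = \<tau> k"
      using tau pa by (simp add: dx1_def dx2_def)
  qed
  note ident = core_identity[OF K dx dt bet pv pw pV pW sch tau e_def e'_def f_def g_def y_def S_def Lf_def]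
  define X1 where "X1 = (\<Sum>k=1..int K. y k * dx1 dx Lf k)"
  define X2 where "X2 = (\<Sum>k=1..int K. Lf k * dx1 dx S k)"
  define X3 where "X3 = (\<Sum>k=1..int K. \<tau> k * S k)"
  define X4 where "X4 = (\<Sum>k=1..int K. dxp dx \<tau> k * g k)"
  define Nt where "Nt = dx * (\<Sum>k=1..int K. (\<tau> k)^2)"
  define Ndt where "Ndt = dx * (\<Sum>k=1..int K. (dxp dx \<tau> k)^2)"
  define CL where "CL = 24 * (B1 + B2) + 3 * Bt * cb * L"
  have Hs0: "Hs \<ge> 0" unfolding Hs_def using dx by (intro add_nonneg_nonneg mult_nonneg_nonneg sum_nonneg) auto
  have heR: "\<forall>k. \<bar>e k\<bar> \<le> R" using he by (simp add: e_def)
  have heR': "\<forall>k. \<bar>e' k\<bar> \<le> R" using he' by (simp add: e'_def)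
  have Ng: "dx * (\<Sum>k=1..int K. (g k)^2) \<le> Hs"
  proof -
    have "\<And>k. (g k)^2 \<le> ((dxp dx e k)^2 + (dxp dx e' k)^2)"
    proof -
      fix k
      have "g k = (dxp dx e k + dxp dx e' k) / 2" using dx by (simp add: g_def f_def dxp_def field_simps)
      then have "(g k)^2 = (dxp dx e k + dxp dx e' k)^2 / 4" by (simp only:) (simp add: power_divide)
      moreover have "0 \<le> (dxp dx e k)^2" "0 \<le> (dxp dx e' k)^2" by simp_all
      ultimately show "(g k)^2 \<le> ((dxp dx e k)^2 + (dxp dx e' k)^2)"
        using sq_sum2[of "dxp dx e k" "dxp dx e' k"] unfolding distrib_left by linarith
    qed
    hence "(\<Sum>k=1..int K. (g k)^2) \<le> (\<Sum>k=1..int K. (dxp dx e k)^2) + (\<Sum>k=1..int K. (dxp dx e' k)^2)"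
      by (simp add: sum.distrib[symmetric] sum_mono)
    hence "dx * (\<Sum>k=1..int K. (g k)^2) \<le> dx * (\<Sum>k=1..int K. (dxp dx e k)^2) + dx * (\<Sum>k=1..int K. (dxp dx e' k)^2)"
      using dx by (simp add: distrib_left[symmetric])
    moreover have "0 \<le> dx * (\<Sum>k=1..int K. (e k)^2)" "0 \<le> dx * (\<Sum>k=1..int K. (e' k)^2)"
      using dx by (auto intro!: mult_nonneg_nonneg sum_nonneg)
    ultimately show ?thesis unfolding Hs_def by linarith
  qed
  have Nf: "dx * (\<Sum>k=1..int K. (f k)^2) \<le> Hs"
  proof -
    have "\<And>k. (f k)^2 \<le> ((e k)^2 + (e' k)^2)"
    proof -
      fix k
      have "(f k)^2 = (e k + e' k)^2 / 4" by (simp add: f_def power_divide)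
      moreover have "0 \<le> (e k)^2" "0 \<le> (e' k)^2" by simp_all
      ultimately show "(f k)^2 \<le> ((e k)^2 + (e' k)^2)"
        using sq_sum2[of "e k" "e' k"] unfolding distrib_left by linarith
    qed
    hence "(\<Sum>k=1..int K. (f k)^2) \<le> (\<Sum>k=1..int K. (e k)^2) + (\<Sum>k=1..int K. (e' k)^2)"
      by (simp add: sum.distrib[symmetric] sum_mono)
    hence "dx * (\<Sum>k=1..int K. (f k)^2) \<le> dx * (\<Sum>k=1..int K. (e k)^2) + dx * (\<Sum>k=1..int K. (e' k)^2)"
      using dx by (simp add: distrib_left[symmetric])
    moreover have "0 \<le> dx * (\<Sum>k=1..int K. (dxp dx e k)^2)" "0 \<le> dx * (\<Sum>k=1..int K. (dxp dx e' k)^2)"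
      using dx by (auto intro!: mult_nonneg_nonneg sum_nonneg)
    ultimately show ?thesis unfolding Hs_def by linarith
  qed
  have Ne: "dx * (\<Sum>k=1..int K. (e k)^2) \<le> Hs" "dx * (\<Sum>k=1..int K. (e' k)^2) \<le> Hs"
  proof -
    have "0 \<le> dx * (\<Sum>k=1..int K. (dxp dx e k)^2)" "0 \<le> dx * (\<Sum>k=1..int K. (dxp dx e' k)^2)"
      "0 \<le> dx * (\<Sum>k=1..int K. (e k)^2)" "0 \<le> dx * (\<Sum>k=1..int K. (e' k)^2)"
      using dx by (auto intro!: mult_nonneg_nonneg sum_nonneg)
    then show "dx * (\<Sum>k=1..int K. (e k)^2) \<le> Hs" "dx * (\<Sum>k=1..int K. (e' k)^2) \<le> Hs"
      unfolding Hs_def by linarith+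
  qed
  have b1: "\<bar>dx * X1\<bar> \<le> CL * Hs"
  proof -
    have "dx * X1 = (\<Sum>k=1..int K. (g k - g (k-1)) * dx1 dx Lf k)"
      using dx by (simp add: X1_def y_def sum_distrib_left)
    also have "\<dots> = 3 * (\<Sum>k=1..int K. (g k - g (k-1)) * dx1 dx (\<lambda>j. P j * f j) k)
        + 1/2 * (\<Sum>k=1..int K. (g k - g (k-1)) * dx1 dx z k)"
    proof -
      have dLf: "\<And>k. dx1 dx Lf k = 3 * dx1 dx (\<lambda>j. P j * f j) k + 1/2 * dx1 dx z k"
        using dx by (simp add: dx1_def Lf_def P_def f_def z_def field_simps)
      have "\<And>k. (g k - g (k-1)) * dx1 dx Lf k = 3 * ((g k - g (k-1)) * dx1 dx (\<lambda>j. P j * f j) k)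
          + 1/2 * ((g k - g (k-1)) * dx1 dx z k)" unfolding dLf by (simp only: ring_distribs mult_ac)
      then show ?thesis by (simp only: sum.distrib sum_distrib_left[symmetric])
    qed
    finally have eq: "dx * X1 = 3 * (\<Sum>k=1..int K. (g k - g (k-1)) * dx1 dx (\<lambda>j. P j * f j) k)
        + 1/2 * (\<Sum>k=1..int K. (g k - g (k-1)) * dx1 dx z k)" .
    have ta: "\<bar>\<Sum>k=1..int K. (g k - g (k-1)) * dx1 dx (\<lambda>j. P j * f j) k\<bar>
      \<le> (2*B1 + 2*B2) * (3 * (dx * (\<Sum>k=1..int K. (g k)^2)) + dx * (\<Sum>k=1..int K. (f k)^2))"
    proof (rule Ta_bound[OF pP pf dx _ _ _ _ g_def])
      show "0 \<le> 2*B1" "0 \<le> 2*B2" using B1 B2 by auto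
      show "\<forall>k. \<bar>P (k + 1) - P k\<bar> \<le> 2 * B1 * dx"
      proof
        fix k
        have "P (k + 1) - P k = (W (k+1) - W k) + (V (k+1) - V k)" by (simp add: P_def algebra_simps)
        then show "\<bar>P (k + 1) - P k\<bar> \<le> 2 * B1 * dx"
          using hW1[rule_format, of k] hV1[rule_format, of k] abs_triangle_ineq[of "W (k+1) - W k" "V (k+1) - V k"]
          by linarith
      qed
      show "\<forall>k. \<bar>P (k + 1) - 2 * P k + P (k - 1)\<bar> \<le> 2 * B2 * dx^2"
      proof
        fix k
        have "P (k + 1) - 2 * P k + P (k - 1) = (W (k+1) - 2 * W k + W (k-1)) + (V (k+1) - 2 * V k + V (k-1))"
          by (simp add: P_def algebra_simps)
        then show "\<bar>P (k + 1) - 2 * P k + P (k - 1)\<bar> \<le> 2 * B2 * dx^2"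
          using hW2[rule_format, of k] hV2[rule_format, of k]
            abs_triangle_ineq[of "W (k+1) - 2 * W k + W (k-1)" "V (k+1) - 2 * V k + V (k-1)"]
          by linarith
      qed
    qed
    have tb: "\<bar>\<Sum>k=1..int K. (g k - g (k-1)) * dx1 dx z k\<bar>
      \<le> (Bt * cb) * L * (dx * (\<Sum>k=1..int K. (g k)^2) + 2 * (dx * (\<Sum>k=1..int K. (e k)^2)) + 2 * (dx * (\<Sum>k=1..int K. (e' k)^2)))"
    proof (rule Tb_bound[OF pg pe pe' dx dxL])
      show "0 \<le> Bt * cb" using Bt cb by simp
      show "\<forall>k. \<bar>z k\<bar> \<le> Bt * cb * dx ^ 3 * (\<bar>e k\<bar> + \<bar>e' k\<bar>)"
      proof
        fix k
        have "\<bar>z k\<bar> = \<bar>W k - V k\<bar> * \<bar>e' k - e k\<bar>" by (simp add: z_def abs_mult)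
        also have "\<dots> \<le> (Bt * (cb * dx^3)) * (\<bar>e k\<bar> + \<bar>e' k\<bar>)"
        proof (rule mult_mono)
          show "\<bar>W k - V k\<bar> \<le> Bt * (cb * dx ^ 3)"
            using hWV[rule_format, of k] dtc Bt by (meson mult_left_mono order_trans)
        qed (use Bt cb dx in auto)
        finally show "\<bar>z k\<bar> \<le> Bt * cb * dx ^ 3 * (\<bar>e k\<bar> + \<bar>e' k\<bar>)" by (simp add: mult.assoc)
      qed
    qed
    have "\<bar>dx * X1\<bar> \<le> 3 * \<bar>\<Sum>k=1..int K. (g k - g (k-1)) * dx1 dx (\<lambda>j. P j * f j) k\<bar>
        + 1/2 * \<bar>\<Sum>k=1..int K. (g k - g (k-1)) * dx1 dx z k\<bar>" unfolding eq by linarith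
    also have "\<dots> \<le> 3 * ((2*B1 + 2*B2) * (3 * Hs + Hs)) + 1/2 * ((Bt * cb) * L * (Hs + 2 * Hs + 2 * Hs))"
    proof -
      have "(2*B1 + 2*B2) * (3 * (dx * (\<Sum>k=1..int K. (g k)^2)) + dx * (\<Sum>k=1..int K. (f k)^2)) \<le> (2*B1 + 2*B2) * (3 * Hs + Hs)"
        using Ng Nf B1 B2 by (intro mult_left_mono) auto
      moreover have "(Bt * cb) * L * (dx * (\<Sum>k=1..int K. (g k)^2) + 2 * (dx * (\<Sum>k=1..int K. (e k)^2)) + 2 * (dx * (\<Sum>k=1..int K. (e' k)^2)))
          \<le> (Bt * cb) * L * (Hs + 2 * Hs + 2 * Hs)"
        using Ng Ne Bt cb dx dxL by (intro mult_left_mono) auto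
      ultimately show ?thesis using ta tb by linarith
    qed
    also have "\<dots> \<le> CL * Hs"
    proof -
      have "0 \<le> Bt * cb * L * Hs" using Bt cb dx dxL Hs0 by simp
      moreover have "3 * ((2*B1 + 2*B2) * (3 * Hs + Hs)) + 1/2 * ((Bt * cb) * L * (Hs + 2 * Hs + 2 * Hs))
         = 24 * (B1 + B2) * Hs + 5/2 * (Bt * cb * L * Hs)" by (simp add: algebra_simps)
      moreover have "CL * Hs = 24 * (B1 + B2) * Hs + 3 * (Bt * cb * L * Hs)" by (simp add: CL_def algebra_simps)
      ultimately show ?thesis by linarith
    qed
    finally show ?thesis .
  qed
  have b2: "\<bar>dx * X2\<bar> \<le> 9 * r * R * Hs"
    using LS_bound[OF pe pe' dx r R hW hV heR heR' S_def Lf_def] unfolding X2_def Hs_def .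
  have b3: "\<bar>dx * X3\<bar> \<le> 1/2 * Nt + 4 * R^2 * Hs"
  proof -
    have pt: "\<bar>\<tau> k * S k\<bar> \<le> 1/2 * (\<tau> k)^2 + 4 * R^2 * ((e k)^2 + (e' k)^2)" for k
    proof -
      have "\<bar>S k\<bar> \<le> R * \<bar>e' k\<bar> + 2 * (R * \<bar>e k\<bar>)"
      proof -
        have "\<bar>S k\<bar> \<le> \<bar>e' k\<bar> * \<bar>e' k\<bar> + \<bar>e' k\<bar> * \<bar>e k\<bar> + \<bar>e k\<bar> * \<bar>e k\<bar>"
          unfolding S_def power2_eq_square abs_mult[symmetric] by (simp add: abs_triangle_ineq order_trans[OF abs_triangle_ineq])
        moreover have "\<bar>e' k\<bar> * \<bar>e' k\<bar> \<le> R * \<bar>e' k\<bar>" "\<bar>e' k\<bar> * \<bar>e k\<bar> \<le> R * \<bar>e k\<bar>" "\<bar>e k\<bar> * \<bar>e k\<bar> \<le> R * \<bar>e k\<bar>"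
          by (rule mult_right_mono[OF heR'[rule_format] abs_ge_zero],
              rule mult_right_mono[OF heR'[rule_format] abs_ge_zero],
              rule mult_right_mono[OF heR[rule_format] abs_ge_zero])
        ultimately show ?thesis by linarith
      qed
      hence "(S k)^2 \<le> (R * \<bar>e' k\<bar> + 2 * (R * \<bar>e k\<bar>))^2"
        by (metis abs_ge_zero power2_abs power_mono)
      also have "\<dots> \<le> 2 * ((R * \<bar>e' k\<bar>)^2 + (2 * (R * \<bar>e k\<bar>))^2)" by (rule sq_sum2)
      also have "\<dots> \<le> 8 * R^2 * ((e k)^2 + (e' k)^2)"
      proof -
        have "0 \<le> R^2 * (e' k)^2" by simp
        then show ?thesis by (simp add: power_mult_distrib algebra_simps)
      qed
      finally have "(S k)^2 \<le> 8 * R^2 * ((e k)^2 + (e' k)^2)" .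
      moreover have "\<bar>\<tau> k * S k\<bar> \<le> ((\<tau> k)^2 + (S k)^2) / 2" using amgm by (simp add: abs_mult)
      ultimately show ?thesis unfolding distrib_left add_divide_distrib by linarith
    qed
    have "\<bar>dx * X3\<bar> = dx * \<bar>X3\<bar>" using dx by (simp add: abs_mult)
    also have "\<dots> \<le> dx * (\<Sum>k=1..int K. 1/2 * (\<tau> k)^2 + 4 * R^2 * ((e k)^2 + (e' k)^2))"
      unfolding X3_def using dx by (intro mult_left_mono sum_abs_bound pt) auto
    also have "\<dots> = 1/2 * Nt + 4 * R^2 * (dx * (\<Sum>k=1..int K. (e k)^2) + dx * (\<Sum>k=1..int K. (e' k)^2))"
      unfolding Nt_def by (simp add: sum.distrib sum_distrib_left algebra_simps)
    also have "\<dots> \<le> 1/2 * Nt + 4 * R^2 * Hs"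
    proof -
      have "0 \<le> dx * (\<Sum>k=1..int K. (dxp dx e k)^2)" "0 \<le> dx * (\<Sum>k=1..int K. (dxp dx e' k)^2)"
        using dx by (auto intro!: mult_nonneg_nonneg sum_nonneg)
      then show ?thesis unfolding Hs_def by (intro add_left_mono mult_left_mono) auto
    qed
    finally show ?thesis .
  qed
  have b4: "- 2 * (dx * X4) \<le> Ndt + Hs"
  proof -
    have "\<And>k. - 2 * (dxp dx \<tau> k * g k) \<le> (dxp dx \<tau> k)^2 + (g k)^2"
    proof -
      fix k have "0 \<le> (dxp dx \<tau> k + g k)^2" by simp
      then show "- 2 * (dxp dx \<tau> k * g k) \<le> (dxp dx \<tau> k)^2 + (g k)^2"
        by (simp add: power2_eq_square algebra_simps)
    qed
    hence "(\<Sum>k=1..int K. - 2 * (dxp dx \<tau> k * g k)) \<le> (\<Sum>k=1..int K. (dxp dx \<tau> k)^2 + (g k)^2)"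
      by (rule sum_mono)
    hence "dx * (\<Sum>k=1..int K. - 2 * (dxp dx \<tau> k * g k)) \<le> dx * (\<Sum>k=1..int K. (dxp dx \<tau> k)^2 + (g k)^2)"
      using dx by (simp add: mult_left_mono)
    hence "- 2 * (dx * X4) \<le> Ndt + dx * (\<Sum>k=1..int K. (g k)^2)"
      unfolding X4_def Ndt_def by (simp add: sum.distrib sum_distrib_left algebra_simps sum_negf)
    then show ?thesis using Ng by linarith
  qed
  have ident2: "((\<Sum>k=1..int K. (dxp dx e' k)^2 * dx) - (\<Sum>k=1..int K. (dxp dx e k)^2 * dx)) / dt
     + (a * (\<Sum>k=1..int K. (e' k)^3 * dx) - a * (\<Sum>k=1..int K. (e k)^3 * dx)) / dt
     = (\<alpha>/3) * (dx * X1) + (\<alpha> * a / 6) * (dx * X2) + (- a) * (dx * X3) - 2 * (dx * X4)"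
    using ident unfolding X1_def X2_def X3_def X4_def a_def by (simp add: algebra_simps)
  have i1: "(\<alpha>/3) * (dx * X1) \<le> \<bar>\<alpha>/3\<bar> * (CL * Hs)" by (rule abs_mul_le[OF b1])
  have i2: "(\<alpha> * a / 6) * (dx * X2) \<le> \<bar>\<alpha> * a / 6\<bar> * (9 * r * R * Hs)" by (rule abs_mul_le[OF b2])
  have i3: "(- a) * (dx * X3) \<le> \<bar>- a\<bar> * (1/2 * Nt + 4 * R^2 * Hs)" by (rule abs_mul_le[OF b3])
  have c1: "ccore \<alpha> \<beta> r R Bt B1 B2 L cb * Hs = \<bar>\<alpha>/3\<bar> * (CL * Hs) + \<bar>\<alpha> * a / 6\<bar> * (9 * r * R * Hs)
      + \<bar>a\<bar> * (4 * R^2 * Hs) + Hs"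
    unfolding ccore_def CL_def a_def by (simp add: abs_divide abs_mult algebra_simps)
  have c2: "\<bar>- a\<bar> * (1/2 * Nt + 4 * R^2 * Hs) = \<bar>\<alpha>\<bar> / (6 * \<bar>\<beta>\<bar>) * Nt + \<bar>a\<bar> * (4 * R^2 * Hs)"
    unfolding a_def by (simp add: abs_divide abs_mult algebra_simps)
  have fin: "((\<Sum>k=1..int K. (dxp dx e' k)^2 * dx) - (\<Sum>k=1..int K. (dxp dx e k)^2 * dx)) / dt
     \<le> - (a * (\<Sum>k=1..int K. (e' k)^3 * dx) - a * (\<Sum>k=1..int K. (e k)^3 * dx)) / dt
       + ccore \<alpha> \<beta> r R Bt B1 B2 L cb * Hs + Ndt + \<bar>\<alpha>\<bar> / (6 * \<bar>\<beta>\<bar>) * Nt"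
    using ident2 i1 i2 i3 c1 c2 b4 by linarith
  show ?thesis using fin unfolding e_def e'_def Hs_def Ndt_def Nt_def a_def .
qed



lemma cbound:
  fixes F :: "real \<Rightarrow> real \<Rightarrow> real"
  assumes "continuous_on ({0..T} \<times> UNIV) (\<lambda>(t, x). F t x)"
  shows "\<exists>B\<ge>0. \<forall>t\<in>{0..T}. \<forall>x\<in>{a..b}. \<bar>F t x\<bar> \<le> B"
proof -
  have "continuous_on ({0..T} \<times> {a..b}) (\<lambda>(t, x). F t x)"
    by (rule continuous_on_subset[OF assms]) auto
  moreover have "compact ({0..T} \<times> {a..b::real})" by (intro compact_Times compact_Icc)
  ultimately have "compact ((\<lambda>(t, x). F t x) ` ({0..T} \<times> {a..b}))" by (rule compact_continuous_image)
  then have "bounded ((\<lambda>(t, x). F t x) ` ({0..T} \<times> {a..b}))" by (rule compact_imp_bounded)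
  then obtain B where B: "\<forall>y\<in>(\<lambda>(t, x). F t x) ` ({0..T} \<times> {a..b}). norm y \<le> B" by (auto simp: bounded_iff)
  show ?thesis
  proof (intro exI[of _ "max B 0"] conjI ballI)
    fix t x assume "t \<in> {0..T}" "x \<in> {a..b}"
    then have "norm (F t x) \<le> B" using B by force
    then show "\<bar>F t x\<bar> \<le> max B 0" by simp
  qed simp
qed

lemma per_int:
  assumes "\<forall>t x. u t (x + L) = u t (x::real)"
  shows "u t (z + real_of_int n * L) = u t z"
proof (induction n rule: int_induct[where k=0])
  case base then show ?case by simp
next
  case (step1 i)
  have "u t (z + real_of_int (i + 1) * L) = u t ((z + real_of_int i * L) + L)" by (simp add: algebra_simps)
  also have "\<dots> = u t z" using assms step1 by simp
  finally show ?case .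
next
  case (step2 i)
  have "u t (z + real_of_int i * L) = u t ((z + real_of_int (i - 1) * L) + L)" by (simp add: algebra_simps)
  also have "\<dots> = u t (z + real_of_int (i - 1) * L)" using assms by simp
  finally show ?case using step2 by simp
qed

lemma reduce:
  assumes "\<forall>t x. u t (x + L) = u t (x::real)" and "L > 0"
  obtains x0 where "x0 \<in> {0..L}" "\<And>t c. u t (x + c) = u t (x0 + c)"
proof -
  define n where "n = \<lfloor>x / L\<rfloor>"
  define x0 where "x0 = x - real_of_int n * L"
  have "real_of_int n \<le> x / L" "x / L < real_of_int n + 1" unfolding n_def by linarith+
  then have "real_of_int n * L \<le> x" "x < (real_of_int n + 1) * L" using assms(2) by (simp_all add: field_simps)
  then have "x0 \<in> {0..L}" unfolding x0_def by (auto simp: algebra_simps)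
  moreover have "u t (x + c) = u t (x0 + c)" for t c
    using per_int[OF assms(1), of t "x0 + c" n] by (simp add: x0_def algebra_simps)
  ultimately show ?thesis using that by blast
qed

lemma smooth_bounds:
  assumes L: "L > 0" and T: "T > 0" and sm: "smooth_kdv_solution \<alpha> \<beta> L T u"
  obtains Bt B1 B2 where "Bt \<ge> 0" "B1 \<ge> 0" "B2 \<ge> 0"
   "\<And>t x h. t \<in> {0..T} \<Longrightarrow> 0 < h \<Longrightarrow> h \<le> L \<Longrightarrow> \<bar>u t (x+h) - u t x\<bar> \<le> B1 * h"
   "\<And>t x h. t \<in> {0..T} \<Longrightarrow> 0 < h \<Longrightarrow> h \<le> L \<Longrightarrow> \<bar>u t (x+h) - 2 * u t x + u t (x-h)\<bar> \<le> B2 * h^2"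
   "\<And>t t' x. t \<in> {0..T} \<Longrightarrow> t' \<in> {0..T} \<Longrightarrow> \<bar>u t' x - u t x\<bar> \<le> Bt * \<bar>t' - t\<bar>"
proof -
  have per: "\<forall>t x. u t (x + L) = u t x" using sm by (simp add: smooth_kdv_solution_def)
  obtain ut ux uxx uxxx :: "real \<Rightarrow> real \<Rightarrow> real" where
    c1: "continuous_on ({0..T} \<times> UNIV) (\<lambda>(t, x). ut t x)" and
    c2: "continuous_on ({0..T} \<times> UNIV) (\<lambda>(t, x). ux t x)" and
    c3: "continuous_on ({0..T} \<times> UNIV) (\<lambda>(t, x). uxx t x)" and
    d: "\<forall>t\<in>{0..T}. \<forall>x.
           ((\<lambda>s. u s x) has_real_derivative ut t x) (at t within {0..T}) \<and>
           ((\<lambda>y. u t y) has_real_derivative ux t x) (at x) \<and>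
           ((\<lambda>y. ux t y) has_real_derivative uxx t x) (at x)"
    using sm unfolding smooth_kdv_solution_def by metis
  obtain Bt where Bt: "Bt \<ge> 0" "\<forall>t\<in>{0..T}. \<forall>x\<in>{0..L}. \<bar>ut t x\<bar> \<le> Bt" using cbound[OF c1] by blast
  obtain B1 where B1: "B1 \<ge> 0" "\<forall>t\<in>{0..T}. \<forall>x\<in>{-L..2*L}. \<bar>ux t x\<bar> \<le> B1" using cbound[OF c2] by blast
  obtain B2 where B2: "B2 \<ge> 0" "\<forall>t\<in>{0..T}. \<forall>x\<in>{-L..2*L}. \<bar>uxx t x\<bar> \<le> B2" using cbound[OF c3] by blast
  have g1: "\<bar>u t b - u t a\<bar> \<le> B1 * \<bar>b - a\<bar>" if "t \<in> {0..T}" "a \<in> {-L..2*L}" "b \<in> {-L..2*L}" for t a b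
  proof -
    have "norm ((\<lambda>y. u t y) b - (\<lambda>y. u t y) a) \<le> B1 * norm (b - a)"
    proof (rule field_differentiable_bound[of "{-L..2*L}"])
      show "convex {-L..2*L}" by simp
      show "\<And>z. z \<in> {-L..2*L} \<Longrightarrow> ((\<lambda>y. u t y) has_field_derivative ux t z) (at z within {-L..2*L})"
        using d that(1) by (auto intro: has_field_derivative_at_within)
      show "\<And>z. z \<in> {-L..2*L} \<Longrightarrow> norm (ux t z) \<le> B1" using B1 that(1) by auto
    qed (use that in auto)
    then show ?thesis by simp
  qed
  have g1x: "\<bar>ux t b - ux t a\<bar> \<le> B2 * \<bar>b - a\<bar>" if "t \<in> {0..T}" "a \<in> {-L..2*L}" "b \<in> {-L..2*L}" for t a b
  proof -
    have "norm ((\<lambda>y. ux t y) b - (\<lambda>y. ux t y) a) \<le> B2 * norm (b - a)"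
    proof (rule field_differentiable_bound[of "{-L..2*L}"])
      show "convex {-L..2*L}" by simp
      show "\<And>z. z \<in> {-L..2*L} \<Longrightarrow> ((\<lambda>y. ux t y) has_field_derivative uxx t z) (at z within {-L..2*L})"
        using d that(1) by (auto intro: has_field_derivative_at_within)
      show "\<And>z. z \<in> {-L..2*L} \<Longrightarrow> norm (uxx t z) \<le> B2" using B2 that(1) by auto
    qed (use that in auto)
    then show ?thesis by simp
  qed
  show ?thesis
  proof (rule that[OF Bt(1) B1(1) B2(1)])
    fix t x h assume t: "t \<in> {0..T}" and h: "0 < h" "h \<le> L"
    obtain x0 where x0: "x0 \<in> {0..L}" "\<And>t c. u t (x + c) = u t (x0 + c)" using reduce[OF per L] by blast
    have "\<bar>u t (x+h) - u t x\<bar> = \<bar>u t (x0+h) - u t x0\<bar>" using x0(2)[of t h] x0(2)[of t 0] by simp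
    also have "\<dots> \<le> B1 * \<bar>x0 + h - x0\<bar>" using g1[OF t, of x0 "x0+h"] x0(1) h L by auto
    finally show "\<bar>u t (x+h) - u t x\<bar> \<le> B1 * h" using h by simp
  next
    fix t x h assume t: "t \<in> {0..T}" and h: "0 < h" "h \<le> L"
    obtain x0 where x0: "x0 \<in> {0..L}" "\<And>t c. u t (x + c) = u t (x0 + c)" using reduce[OF per L] by blast
    define \<phi> where "\<phi> = (\<lambda>y. u t (y + h) - u t y)"
    have "\<bar>u t (x+h) - 2 * u t x + u t (x-h)\<bar> = \<bar>\<phi> x0 - \<phi> (x0 - h)\<bar>"
      using x0(2)[of t h] x0(2)[of t 0] x0(2)[of t "-h"] by (simp add: \<phi>_def)
    also have "\<dots> \<le> (B2 * h) * norm (x0 - (x0 - h))"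
    proof -
      have "norm (\<phi> x0 - \<phi> (x0 - h)) \<le> (B2 * h) * norm (x0 - (x0 - h))"
      proof (rule field_differentiable_bound[of "{-L..L}" \<phi> "\<lambda>z. ux t (z + h) - ux t z"])
        show "convex {-L..L}" by simp
        show "(\<phi> has_field_derivative ux t (z + h) - ux t z) (at z within {-L..L})" if "z \<in> {-L..L}" for z
        proof -
          have "((\<lambda>y. u t y) has_field_derivative ux t (z + h)) (at (z + h))" using d t by auto
          then have "((\<lambda>y. u t (y + h)) has_field_derivative ux t (z + h)) (at z)" by (simp add: DERIV_shift)
          moreover have "((\<lambda>y. u t y) has_field_derivative ux t z) (at z)" using d t by auto
          ultimately have "(\<phi> has_field_derivative ux t (z + h) - ux t z) (at z)"
            unfolding \<phi>_def by (rule DERIV_diff)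
          then show ?thesis by (rule has_field_derivative_at_within)
        qed
        show "norm (ux t (z + h) - ux t z) \<le> B2 * h" if "z \<in> {-L..L}" for z
          using g1x[OF t, of z "z+h"] that h by auto
      qed (use x0(1) h in auto)
      then show ?thesis by simp
    qed
    finally show "\<bar>u t (x+h) - 2 * u t x + u t (x-h)\<bar> \<le> B2 * h^2" using h by (simp add: power2_eq_square)
  next
    fix t t' x assume t: "t \<in> {0..T}" and t': "t' \<in> {0..T}"
    obtain x0 where x0: "x0 \<in> {0..L}" "\<And>t c. u t (x + c) = u t (x0 + c)" using reduce[OF per L] by blast
    have "norm ((\<lambda>s. u s x0) t' - (\<lambda>s. u s x0) t) \<le> Bt * norm (t' - t)"
    proof (rule field_differentiable_bound[of "{0..T}"])
      show "convex {0..T}" by simp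
      show "\<And>z. z \<in> {0..T} \<Longrightarrow> ((\<lambda>s. u s x0) has_field_derivative ut z x0) (at z within {0..T})"
        using d by auto
      show "\<And>z. z \<in> {0..T} \<Longrightarrow> norm (ut z x0) \<le> Bt" using Bt x0(1) by auto
    qed (use t t' in auto)
    then show "\<bar>u t' x - u t x\<bar> \<le> Bt * \<bar>t' - t\<bar>" using x0(2)[of t 0] x0(2)[of t' 0] by simp
  qed
qed



lemma pg_multi:
  assumes "periodic_grid K f"
  shows "f (j + n * int K) = f j"
proof (induction n rule: int_induct[where k=0])
  case base then show ?case by simp
next
  case (step1 i)
  have "f (j + (i + 1) * int K) = f ((j + i * int K) + int K)" by (simp add: algebra_simps)
  also have "\<dots> = f j" using assms step1 by (simp add: periodic_grid_def)
  finally show ?case .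
next
  case (step2 i)
  have "f (j + i * int K) = f ((j + (i - 1) * int K) + int K)" by (simp add: algebra_simps)
  also have "\<dots> = f (j + (i - 1) * int K)" using assms by (simp add: periodic_grid_def)
  finally show ?case using step2 by simp
qed

lemma sup_all:
  assumes p: "periodic_grid K f" and K: "K > 0" and s: "supnorm K f \<le> b"
  shows "\<bar>f k\<bar> \<le> b"
proof -
  define j where "j = (k - 1) mod int K + 1"
  have j: "j \<in> {1..int K}" using K by (simp add: j_def) (smt (verit) Euclidean_Rings.pos_mod_bound of_nat_0_less_iff)
  have "k = j + ((k - 1) div int K) * int K" unfolding j_def by (metis add.commute diff_add_cancel add.assoc mult_div_mod_eq mult.commute add.left_commute) 
  then have "f k = f j" using pg_multi[OF p, of j "(k - 1) div int K"] by simp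
  moreover have "\<bar>f j\<bar> \<le> supnorm K f" unfolding supnorm_def using j by (intro Max_ge) auto
  ultimately show ?thesis using s by simp
qed

lemma gsq: "dx \<ge> 0 \<Longrightarrow> (gnorm K dx f)^2 = (\<Sum>k=1..int K. (f k)^2 * dx)"
  unfolding gnorm_def by (simp add: sum_nonneg)

lemma gsq': "dx \<ge> 0 \<Longrightarrow> (gnorm K dx f)^2 = dx * (\<Sum>k=1..int K. (f k)^2)"
  unfolding gsq by (simp add: sum_distrib_left mult.commute)

lemma h1sq: "dx \<ge> 0 \<Longrightarrow> (h1norm K dx f)^2 = dx * (\<Sum>k=1..int K. (f k)^2) + dx * (\<Sum>k=1..int K. (dxp dx f k)^2)"
  unfolding h1norm_def by (simp add: gsq' sum_nonneg)



lemma main_fixed: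
  fixes \<alpha> \<beta> L T q r Bt B1 B2 :: real and u :: "real \<Rightarrow> real \<Rightarrow> real"
    and K M M0 :: nat and U :: "nat \<Rightarrow> int \<Rightarrow> real" and c0 dx dt :: real
    and ut e \<tau> :: "nat \<Rightarrow> int \<Rightarrow> real" and A :: "nat \<Rightarrow> real"
  assumes bet: "\<beta> \<noteq> 0" and L: "L > 0" and T: "T > 0" and q: "q > 1"
    and per: "\<forall>t x. u t (x + L) = u t x"
    and ur: "\<forall>t\<in>{0..T}. \<forall>x. \<bar>u t x\<bar> < r" and r: "r \<ge> 0"
    and Bt: "Bt \<ge> 0" and B1: "B1 \<ge> 0" and B2: "B2 \<ge> 0"
    and G1: "\<And>t x h. t \<in> {0..T} \<Longrightarrow> 0 < h \<Longrightarrow> h \<le> L \<Longrightarrow> \<bar>u t (x+h) - u t x\<bar> \<le> B1 * h"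
    and G2: "\<And>t x h. t \<in> {0..T} \<Longrightarrow> 0 < h \<Longrightarrow> h \<le> L \<Longrightarrow> \<bar>u t (x+h) - 2 * u t x + u t (x-h)\<bar> \<le> B2 * h^2"
    and Gt: "\<And>t t' x. t \<in> {0..T} \<Longrightarrow> t' \<in> {0..T} \<Longrightarrow> \<bar>u t' x - u t x\<bar> \<le> Bt * \<bar>t' - t\<bar>"
    and dx_def: "dx = L / real K" and dt_def: "dt = T / real M"
    and ut_def: "ut = (\<lambda>m k. u (real m * dt) (real_of_int k * dx))"
    and e_def: "e = (\<lambda>m k. U m k - ut m k)"
    and tau_def: "\<tau> = trunc_err \<alpha> \<beta> dx dt ut"
    and A_def: "A = (\<lambda>m. \<alpha> / (3 * \<beta>) * (\<Sum>k = 1..int K. (e m k)^3 * dx))"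
  shows "K > 0 \<and> M > 0 \<and> M0 < M
        \<and> (\<forall>k. U 0 k = u 0 (real_of_int k * dx))
        \<and> (\<forall>n \<le> M0 + 1. periodic_grid K (U n))
        \<and> (\<forall>n \<le> M0. scheme_step \<alpha> \<beta> dx dt (U n) (U (Suc n)))
        \<and> (\<forall>m \<le> M0. supnorm K (U m) \<le> r)
        \<and> dt < min (eps1 \<alpha> \<beta> q r dx) (eps2 \<alpha> \<beta> q r dx)
        \<and> supnorm K (U (M0 + 1)) \<le> q * r
        \<and> c0 > 0
        \<and> (\<forall>m \<le> M0. gnorm K dx (\<tau> m) \<le> c0 * (dt^2 + dx^2)
                    \<and> gnorm K dx (dxp dx (\<tau> m)) \<le> c0 * (dt^2 + dx^2))
        \<and> dt \<le> dx
     \<longrightarrow> (\<forall>m \<le> M0.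
           dtp dt (\<lambda>n. (gnorm K dx (dxp dx (e n)))^2) m
             \<le> - dtp dt A m + (2 * ccore \<alpha> \<beta> r ((q+1)*r) Bt B1 B2 L (2 / (3 * \<bar>\<beta>\<bar>))) * mutp (\<lambda>n. (h1norm K dx (e n))^2) m
               + (\<bar>\<alpha>\<bar> / (6 * \<bar>\<beta>\<bar>) + 1) * c0^2 * (dt^2 + dx^2)^2)"
proof (intro impI allI)
  fix m
  assume H: "K > 0 \<and> M > 0 \<and> M0 < M
        \<and> (\<forall>k. U 0 k = u 0 (real_of_int k * dx))
        \<and> (\<forall>n \<le> M0 + 1. periodic_grid K (U n))
        \<and> (\<forall>n \<le> M0. scheme_step \<alpha> \<beta> dx dt (U n) (U (Suc n)))
        \<and> (\<forall>m \<le> M0. supnorm K (U m) \<le> r)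
        \<and> dt < min (eps1 \<alpha> \<beta> q r dx) (eps2 \<alpha> \<beta> q r dx)
        \<and> supnorm K (U (M0 + 1)) \<le> q * r
        \<and> c0 > 0
        \<and> (\<forall>m \<le> M0. gnorm K dx (\<tau> m) \<le> c0 * (dt^2 + dx^2)
                    \<and> gnorm K dx (dxp dx (\<tau> m)) \<le> c0 * (dt^2 + dx^2))
        \<and> dt \<le> dx"
    assume mM0: "m \<le> M0"
    from H have K: "K > 0" and M: "M > 0" and M0M: "M0 < M"
      and perU: "\<forall>n \<le> M0 + 1. periodic_grid K (U n)"
      and schU: "\<forall>n \<le> M0. scheme_step \<alpha> \<beta> dx dt (U n) (U (Suc n))"
      and supU: "\<forall>m \<le> M0. supnorm K (U m) \<le> r"
      and dtlt: "dt < min (eps1 \<alpha> \<beta> q r dx) (eps2 \<alpha> \<beta> q r dx)"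
      and supM: "supnorm K (U (M0 + 1)) \<le> q * r"
      and c0: "c0 > 0"
      and taub: "\<forall>m \<le> M0. gnorm K dx (\<tau> m) \<le> c0 * (dt^2 + dx^2)
                    \<and> gnorm K dx (dxp dx (\<tau> m)) \<le> c0 * (dt^2 + dx^2)"
      by blast+
    define R where "R = (q+1)*r"
    define cb where "cb = 2 / (3 * \<bar>\<beta>\<bar>)"
    define v where "v = U m"
    define w where "w = U (Suc m)"
    define V where "V = ut m"
    define W where "W = ut (Suc m)"
    have dx: "dx > 0" using K L by (simp add: dx_def)
    have dxL: "dx \<le> L" using K L by (simp add: dx_def field_simps)
    have Kdx: "real K * dx = L" using K by (simp add: dx_def)
    have dt: "dt > 0" using M T by (simp add: dt_def)
    have R: "R \<ge> 0" using q r by (simp add: R_def)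
    have rq: "r \<le> q * r" using mult_right_mono[of 1 q r] q r by simp
    have cb: "cb \<ge> 0" by (simp add: cb_def)
    have dtc: "dt \<le> cb * dx^3"
    proof -
      have "dt < eps2 \<alpha> \<beta> q r dx" using dtlt by simp
      also have "eps2 \<alpha> \<beta> q r dx \<le> dx^3 / (3/2 * \<bar>\<beta>\<bar>)"
        unfolding eps2_def using bet dx r q
        by (intro divide_left_mono) (auto intro!: mult_pos_pos add_nonneg_pos mult_nonneg_nonneg)
      also have "\<dots> = cb * dx^3" by (simp add: cb_def field_simps)
      finally show ?thesis by simp
    qed
    have tm: "real m * dt \<in> {0..T}" "real (Suc m) * dt \<in> {0..T}"
    proof -
      have "real (Suc m) \<le> real M" using mM0 M0M by simp
      then have "real (Suc m) * dt \<le> real M * dt" using dt by (intro mult_right_mono) auto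
      moreover have "real M * dt = T" using M by (simp add: dt_def)
      moreover have "real m * dt \<le> real (Suc m) * dt" using dt by (intro mult_right_mono) auto
      ultimately show "real m * dt \<in> {0..T}" "real (Suc m) * dt \<in> {0..T}" using dt by auto
    qed
    have put: "periodic_grid K (ut n)" for n
      unfolding periodic_grid_def ut_def
    proof
      fix k
      have "real_of_int (k + int K) * dx = real_of_int k * dx + L" using Kdx by (simp add: distrib_right)
      then show "u (real n * dt) (real_of_int (k + int K) * dx) = u (real n * dt) (real_of_int k * dx)"
        using per by simp
    qed
    have pv: "periodic_grid K v" using perU mM0 by (simp add: v_def)
    have pw: "periodic_grid K w" using perU mM0 by (simp add: w_def)
    have pV: "periodic_grid K V" using put by (simp add: V_def)
    have pW: "periodic_grid K W" using put by (simp add: W_def)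
    have sch: "\<forall>k. (w k - v k) / dt =
        - \<alpha> / 6 * dx1 dx (\<lambda>j. (w j)^2 + w j * v j + (v j)^2) k
        + \<beta> * dx1 dx (dx2 dx (\<lambda>j. (w j + v j) / 2)) k"
      using schU mM0 unfolding scheme_step_def v_def w_def by blast
    have tau: "\<forall>k. \<tau> m k = (W k - V k) / dt - ( - \<alpha> / 6 * dx1 dx (\<lambda>j. (W j)^2 + W j * V j + (V j)^2) k
        + \<beta> * dx1 dx (dx2 dx (\<lambda>j. (W j + V j) / 2)) k)"
      unfolding tau_def trunc_err_def W_def V_def by simp
    have hv: "\<forall>k. \<bar>v k\<bar> \<le> r" using sup_all[OF pv K] supU mM0 by (simp add: v_def)
    have hw: "\<forall>k. \<bar>w k\<bar> \<le> q * r"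
    proof
      fix k
      show "\<bar>w k\<bar> \<le> q * r"
      proof (cases "Suc m \<le> M0")
        case True
        then have "\<bar>w k\<bar> \<le> r" using sup_all[OF pw K] supU by (simp add: w_def)
        moreover note rq
        ultimately show ?thesis by linarith
      next
        case False
        then have "Suc m = M0 + 1" using mM0 by simp
        then show ?thesis using sup_all[OF pw K] supM by (simp add: w_def)
      qed
    qed
    have hV: "\<forall>k. \<bar>V k\<bar> \<le> r" using ur tm by (auto simp: V_def ut_def less_imp_le)
    have hW: "\<forall>k. \<bar>W k\<bar> \<le> r" using ur tm by (auto simp: W_def ut_def less_imp_le)
    have he: "\<forall>k. \<bar>v k - V k\<bar> \<le> R"
    proof
      fix k
      have "\<bar>v k - V k\<bar> \<le> r + r" using hv hV abs_triangle_ineq4[of "v k" "V k"] by (meson add_mono order_trans)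
      moreover have "r + r \<le> R" using rq by (simp add: R_def algebra_simps)
      ultimately show "\<bar>v k - V k\<bar> \<le> R" by linarith
    qed
    have he': "\<forall>k. \<bar>w k - W k\<bar> \<le> R"
    proof
      fix k
      have "\<bar>w k - W k\<bar> \<le> q * r + r" using hw hW abs_triangle_ineq4[of "w k" "W k"] by (meson add_mono order_trans)
      then show "\<bar>w k - W k\<bar> \<le> R" by (simp add: R_def algebra_simps)
    qed
    have hWV: "\<forall>k. \<bar>W k - V k\<bar> \<le> Bt * dt"
    proof
      fix k
      have "\<bar>W k - V k\<bar> \<le> Bt * \<bar>real (Suc m) * dt - real m * dt\<bar>"
        unfolding W_def V_def ut_def using Gt[OF tm(1) tm(2)] by simp
      then show "\<bar>W k - V k\<bar> \<le> Bt * dt" using dt by (simp add: algebra_simps)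
    qed
    have sh1: "\<And>k. real_of_int (k + 1) * dx = real_of_int k * dx + dx" by (simp add: distrib_right)
    have sh1': "\<And>k. (real_of_int k + 1) * dx = real_of_int k * dx + dx" by (simp add: distrib_right)
    have sh2': "\<And>k. (real_of_int k - 1) * dx = real_of_int k * dx - dx" by (simp add: left_diff_distrib)
    have sh2: "\<And>k. real_of_int (k - 1) * dx = real_of_int k * dx - dx" by (simp add: left_diff_distrib)
    have d1: "\<forall>k. \<bar>ut n (k+1) - ut n k\<bar> \<le> B1 * dx" if "real n * dt \<in> {0..T}" for n
      unfolding ut_def using G1[OF that _ dxL] dx by (simp add: sh1 sh1')
    have d2: "\<forall>k. \<bar>ut n (k+1) - 2 * ut n k + ut n (k-1)\<bar> \<le> B2 * dx^2" if "real n * dt \<in> {0..T}" for n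
      unfolding ut_def using G2[OF that _ dxL] dx by (simp add: sh1 sh2 sh1' sh2')
    have hW1: "\<forall>k. \<bar>W (k+1) - W k\<bar> \<le> B1 * dx" using d1[OF tm(2)] by (simp add: W_def)
    have hV1: "\<forall>k. \<bar>V (k+1) - V k\<bar> \<le> B1 * dx" using d1[OF tm(1)] by (simp add: V_def)
    have hW2: "\<forall>k. \<bar>W (k+1) - 2 * W k + W (k-1)\<bar> \<le> B2 * dx^2" using d2[OF tm(2)] by (simp add: W_def)
    have hV2: "\<forall>k. \<bar>V (k+1) - 2 * V k + V (k-1)\<bar> \<le> B2 * dx^2" using d2[OF tm(1)] by (simp add: V_def)
    note CI = core_ineq[OF K dx dt bet pv pw pV pW sch tau dxL dtc cb r R Bt B1 B2 hW hV he he' hWV hW1 hV1 hW2 hV2]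
    have em: "e m = (\<lambda>k. v k - V k)" "e (Suc m) = (\<lambda>k. w k - W k)"
      by (simp_all add: e_def v_def V_def w_def W_def)
    define X where "X = c0 * (dt^2 + dx^2)"
    have X0: "X \<ge> 0" using c0 by (simp add: X_def)
    have tb1: "dx * (\<Sum>k=1..int K. (\<tau> m k)^2) \<le> X^2"
    proof -
      have "gnorm K dx (\<tau> m) \<le> X" using taub mM0 by (simp add: X_def)
      then have "(gnorm K dx (\<tau> m))^2 \<le> X^2" using dx by (intro power_mono) (auto simp: gnorm_def intro!: sum_nonneg)
      then show ?thesis using dx by (simp add: gsq')
    qed
    have tb2: "dx * (\<Sum>k=1..int K. (dxp dx (\<tau> m) k)^2) \<le> X^2"
    proof -
      have "gnorm K dx (dxp dx (\<tau> m)) \<le> X" using taub mM0 by (simp add: X_def)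
      then have "(gnorm K dx (dxp dx (\<tau> m)))^2 \<le> X^2" using dx by (intro power_mono) (auto simp: gnorm_def intro!: sum_nonneg)
      then show ?thesis using dx by (simp add: gsq')
    qed
    have lhs: "dtp dt (\<lambda>n. (gnorm K dx (dxp dx (e n)))^2) m =
      ((\<Sum>k=1..int K. (dxp dx (\<lambda>k. w k - W k) k)^2 * dx) - (\<Sum>k=1..int K. (dxp dx (\<lambda>k. v k - V k) k)^2 * dx)) / dt"
      unfolding dtp_def using dx by (simp add: gsq em)
    have dA: "dtp dt A m = (\<alpha> / (3*\<beta>) * (\<Sum>k=1..int K. (w k - W k)^3 * dx) - \<alpha> / (3*\<beta>) * (\<Sum>k=1..int K. (v k - V k)^3 * dx)) / dt"
      unfolding dtp_def A_def using em by simp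
    have mu: "(2 * ccore \<alpha> \<beta> r ((q+1)*r) Bt B1 B2 L (2 / (3 * \<bar>\<beta>\<bar>))) * mutp (\<lambda>n. (h1norm K dx (e n))^2) m
      = ccore \<alpha> \<beta> r R Bt B1 B2 L cb * (dx * (\<Sum>k=1..int K. (v k - V k)^2) + dx * (\<Sum>k=1..int K. (w k - W k)^2)
         + dx * (\<Sum>k=1..int K. (dxp dx (\<lambda>k. v k - V k) k)^2) + dx * (\<Sum>k=1..int K. (dxp dx (\<lambda>k. w k - W k) k)^2))"
      unfolding mutp_def R_def[symmetric] cb_def[symmetric] using dx by (simp add: h1sq em algebra_simps)
    have ct: "\<bar>\<alpha>\<bar> / (6 * \<bar>\<beta>\<bar>) * (dx * (\<Sum>k=1..int K. (\<tau> m k)^2)) \<le> \<bar>\<alpha>\<bar> / (6 * \<bar>\<beta>\<bar>) * X^2"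
      using tb1 by (intro mult_left_mono) auto
    have cX: "(\<bar>\<alpha>\<bar> / (6 * \<bar>\<beta>\<bar>) + 1) * c0^2 * (dt^2 + dx^2)^2 = \<bar>\<alpha>\<bar> / (6 * \<bar>\<beta>\<bar>) * X^2 + X^2"
    proof -
      have "X^2 = c0^2 * (dt^2 + dx^2)^2" unfolding X_def by (simp only: power_mult_distrib)
      then show ?thesis by (simp add: algebra_simps)
    qed
    show "dtp dt (\<lambda>n. (gnorm K dx (dxp dx (e n)))^2) m
             \<le> - dtp dt A m + (2 * ccore \<alpha> \<beta> r ((q+1)*r) Bt B1 B2 L (2 / (3 * \<bar>\<beta>\<bar>))) * mutp (\<lambda>n. (h1norm K dx (e n))^2) m
               + (\<bar>\<alpha>\<bar> / (6 * \<bar>\<beta>\<bar>) + 1) * c0^2 * (dt^2 + dx^2)^2"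
      unfolding lhs dA mu cX using CI ct tb2 by linarith
qed



theorem lemma3p5:
  fixes \<alpha> \<beta> L T q r :: real and u :: "real \<Rightarrow> real \<Rightarrow> real"
  assumes "\<beta> \<noteq> 0" and "L > 0" and "T > 0" and "q > 1"
    and "smooth_kdv_solution \<alpha> \<beta> L T u"
    and "\<forall>t\<in>{0..T}. \<forall>x. \<bar>u t x\<bar> < r"
  shows "\<exists>C2 > 0. \<forall>(K::nat) (M::nat) (M0::nat) (U::nat \<Rightarrow> int \<Rightarrow> real) (c0::real).
    (let dx = L / real K; dt = T / real M;
         ut = (\<lambda>m k. u (real m * dt) (real_of_int k * dx));
         e = (\<lambda>m k. U m k - ut m k);
         \<tau> = trunc_err \<alpha> \<beta> dx dt ut;
         A = (\<lambda>m. \<alpha> / (3 * \<beta>) * (\<Sum>k = 1..int K. (e m k)^3 * dx))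
     in K > 0 \<and> M > 0 \<and> M0 < M
        \<and> (\<forall>k. U 0 k = u 0 (real_of_int k * dx))
        \<and> (\<forall>n \<le> M0 + 1. periodic_grid K (U n))
        \<and> (\<forall>n \<le> M0. scheme_step \<alpha> \<beta> dx dt (U n) (U (Suc n)))
        \<and> (\<forall>m \<le> M0. supnorm K (U m) \<le> r)
        \<and> dt < min (eps1 \<alpha> \<beta> q r dx) (eps2 \<alpha> \<beta> q r dx)
        \<and> supnorm K (U (M0 + 1)) \<le> q * r
        \<and> c0 > 0
        \<and> (\<forall>m \<le> M0. gnorm K dx (\<tau> m) \<le> c0 * (dt^2 + dx^2)
                    \<and> gnorm K dx (dxp dx (\<tau> m)) \<le> c0 * (dt^2 + dx^2))
        \<and> dt \<le> dx
     \<longrightarrow> (\<forall>m \<le> M0.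
           dtp dt (\<lambda>n. (gnorm K dx (dxp dx (e n)))^2) m
             \<le> - dtp dt A m + C2 * mutp (\<lambda>n. (h1norm K dx (e n))^2) m
               + (\<bar>\<alpha>\<bar> / (6 * \<bar>\<beta>\<bar>) + 1) * c0^2 * (dt^2 + dx^2)^2))"
proof -
  have per: "\<forall>t x. u t (x + L) = u t x" using assms(5) by (simp add: smooth_kdv_solution_def)
  obtain Bt B1 B2 where Bt: "Bt \<ge> 0" and B1: "B1 \<ge> 0" and B2: "B2 \<ge> 0"
   and G1: "\<And>t x h. t \<in> {0..T} \<Longrightarrow> 0 < h \<Longrightarrow> h \<le> L \<Longrightarrow> \<bar>u t (x+h) - u t x\<bar> \<le> B1 * h"
   and G2: "\<And>t x h. t \<in> {0..T} \<Longrightarrow> 0 < h \<Longrightarrow> h \<le> L \<Longrightarrow> \<bar>u t (x+h) - 2 * u t x + u t (x-h)\<bar> \<le> B2 * h^2"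
   and Gt: "\<And>t t' x. t \<in> {0..T} \<Longrightarrow> t' \<in> {0..T} \<Longrightarrow> \<bar>u t' x - u t x\<bar> \<le> Bt * \<bar>t' - t\<bar>"
    using smooth_bounds[OF assms(2) assms(3) assms(5)] by metis
  have "\<bar>u 0 0\<bar> < r" using assms(6) assms(3) by auto
  then have r: "r \<ge> 0" by linarith
  have q1: "q + 1 \<ge> 0" using assms(4) by simp
  show ?thesis
  proof (intro exI[of _ "2 * ccore \<alpha> \<beta> r ((q+1)*r) Bt B1 B2 L (2 / (3 * \<bar>\<beta>\<bar>))"] conjI allI)
    show "0 < 2 * ccore \<alpha> \<beta> r ((q+1)*r) Bt B1 B2 L (2 / (3 * \<bar>\<beta>\<bar>))"
      using ccore_pos[of r "(q+1)*r" Bt B1 B2 L "2 / (3 * \<bar>\<beta>\<bar>)" \<alpha> \<beta>] r q1 Bt B1 B2 assms(2) by simp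
  next
    fix K M M0 :: nat and U :: "nat \<Rightarrow> int \<Rightarrow> real" and c0 :: real
    show "let dx = L / real K; dt = T / real M;
         ut = (\<lambda>m k. u (real m * dt) (real_of_int k * dx));
         e = (\<lambda>m k. U m k - ut m k);
         \<tau> = trunc_err \<alpha> \<beta> dx dt ut;
         A = (\<lambda>m. \<alpha> / (3 * \<beta>) * (\<Sum>k = 1..int K. (e m k)^3 * dx))
     in K > 0 \<and> M > 0 \<and> M0 < M
        \<and> (\<forall>k. U 0 k = u 0 (real_of_int k * dx))
        \<and> (\<forall>n \<le> M0 + 1. periodic_grid K (U n))
        \<and> (\<forall>n \<le> M0. scheme_step \<alpha> \<beta> dx dt (U n) (U (Suc n)))
        \<and> (\<forall>m \<le> M0. supnorm K (U m) \<le> r)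
        \<and> dt < min (eps1 \<alpha> \<beta> q r dx) (eps2 \<alpha> \<beta> q r dx)
        \<and> supnorm K (U (M0 + 1)) \<le> q * r
        \<and> c0 > 0
        \<and> (\<forall>m \<le> M0. gnorm K dx (\<tau> m) \<le> c0 * (dt^2 + dx^2)
                    \<and> gnorm K dx (dxp dx (\<tau> m)) \<le> c0 * (dt^2 + dx^2))
        \<and> dt \<le> dx
     \<longrightarrow> (\<forall>m \<le> M0.
           dtp dt (\<lambda>n. (gnorm K dx (dxp dx (e n)))^2) m
             \<le> - dtp dt A m + (2 * ccore \<alpha> \<beta> r ((q+1)*r) Bt B1 B2 L (2 / (3 * \<bar>\<beta>\<bar>))) * mutp (\<lambda>n. (h1norm K dx (e n))^2) m
               + (\<bar>\<alpha>\<bar> / (6 * \<bar>\<beta>\<bar>) + 1) * c0^2 * (dt^2 + dx^2)^2)"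
      unfolding Let_def
      by (rule main_fixed[OF assms(1-4) per assms(6) r Bt B1 B2 G1 G2 Gt refl refl refl refl refl refl])
  qed
qed


end
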